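(* In the triangular-array setting (for each $n$, an independent trajectory $H^n_{m_n}$ of length $m_n$ generated by the adaptive linear Gaussian sampling procedure with sampling rule $\Lambda^n$, with the same true $\beta_0\in\mathbb{R}^p$, variance $\sigma^2>0$ and prior $\pi$ for all $n$), let $\mathbf{X}_n$ be the $m_n\times p$ matrix with rows $(x^n_j)^\top$, $\mathbf{y}_n=(y^n_1,\dots,y^n_{m_n})^\top$, and $\hat\beta_n=(\mathbf{X}_n^\top\mathbf{X}_n)^{-1}\mathbf{X}_n^\top\mathbf{y}_n$. Assume: (i) each $x^n_j\in\{e_1,\dots,e_p\}$; (ii) $\lambda_{\min}(\mathbf{X}_n^\top\mathbf{X}_n)\xrightarrow{p}\infty$; (iii) $\pi$ is a continuous and bounded density on $\mathbb{R}^p$ with $\pi(\beta_0)>0$. Then $$\big\|\pi(\cdot\mid H^n_{m_n})-\mathcal{N}\big(\hat\beta_n,\sigma^2(\mathbf{X}_n^\top\mathbf{X}_n)^{-1}\big)\big\|_{\mathrm{TV}}\xrightarrow{p}0.$$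
   Context: Adaptive linear Gaussian sampling procedure: given a covariate sampling rule $\Lambda$ that maps any finite history $H_{j-1}=((x_1,y_1),\dots,(x_{j-1},y_{j-1}))$ to a probability distribution $\Lambda(\cdot\mid H_{j-1})$ on $\mathbb{R}^p$, a coefficient vector $\beta$ and known variance $\sigma^2>0$, set $H_0=\emptyset$ and for $j=1,2,\dots$: draw $x_j\sim\Lambda(\cdot\mid H_{j-1})$, then $y_j\sim\mathcal{N}(x_j^\top\beta,\sigma^2)$ conditionally on the past and $x_j$, and set $H_j=((x_1,y_1),\dots,(x_j,y_j))$. The posterior is $\pi(\beta\mid H^n_{m_n})\propto\pi(\beta)\prod_{j=1}^{m_n}\exp\!\big(-(y^n_j-(x^n_j)^\top\beta)^2/(2\sigma^2)\big)$. $\|\cdot\|_{\mathrm{TV}}$ is total variation distance; $\lambda_{\min}$ the smallest eigenvalue. *)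

theory Defs
  imports "HOL-Probability.Probability"
begin

text \<open>A history of length j is a function on the indices 0..j-1 (index k stands for the
(k+1)-st pair (x,y)); the measurable space of histories of length j:\<close>

definition hist_space :: "nat \<Rightarrow> (nat \<Rightarrow> (real^'p::finite) \<times> real) measure" where
  "hist_space j = PiM {..<j} (\<lambda>_. borel)"

text \<open>Law of the trajectory H_j produced by the sampling rule Lam (Lam j h is the
distribution of x_{j+1} given the history h of length j), coefficient beta and noise
standard deviation sd (variance sd^2).\<close>

primrec traj :: "(nat \<Rightarrow> (nat \<Rightarrow> (real^'p::finite) \<times> real) \<Rightarrow> (real^'p) measure)
    \<Rightarrow> real^'p \<Rightarrow> real \<Rightarrow> nat \<Rightarrow> (nat \<Rightarrow> (real^'p) \<times> real) measure" where
  "traj Lam beta sd 0 = return (hist_space 0) (\<lambda>_. undefined)"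
| "traj Lam beta sd (Suc j) =
     traj Lam beta sd j \<bind> (\<lambda>h. Lam j h \<bind> (\<lambda>x.
       density lborel (normal_density (x \<bullet> beta) sd) \<bind> (\<lambda>y.
         return (hist_space (Suc j)) (h(j := (x, y))))))"

definition gram :: "(nat \<Rightarrow> (real^'p::finite) \<times> real) \<Rightarrow> nat \<Rightarrow> real^'p^'p" where
  "gram h m = (\<Sum>j<m. (\<chi> a b. fst (h j) $ a * fst (h j) $ b))"

definition xty :: "(nat \<Rightarrow> (real^'p::finite) \<times> real) \<Rightarrow> nat \<Rightarrow> real^'p" where
  "xty h m = (\<Sum>j<m. snd (h j) *\<^sub>R fst (h j))"

definition ols :: "(nat \<Rightarrow> (real^'p::finite) \<times> real) \<Rightarrow> nat \<Rightarrow> real^'p" where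
  "ols h m = matrix_inv (gram h m) *v xty h m"

definition eigenvalues :: "real^'p^'p \<Rightarrow> real set" where
  "eigenvalues A = {c. \<exists>v. v \<noteq> 0 \<and> A *v v = c *\<^sub>R v}"

definition lambda_min :: "real^'p^'p \<Rightarrow> real" where
  "lambda_min A = Min (eigenvalues A)"

definition mvn :: "(real^'p::finite) \<Rightarrow> real^'p^'p \<Rightarrow> (real^'p) measure" where
  "mvn mu Cov = density lborel (\<lambda>b. ennreal
     ((2 * pi) powr (- real CARD('p) / 2) * det Cov powr (- 1 / 2)
       * exp (- (1 / 2) * ((b - mu) \<bullet> (matrix_inv Cov *v (b - mu))))))"

definition lik :: "real \<Rightarrow> (nat \<Rightarrow> (real^'p::finite) \<times> real) \<Rightarrow> nat \<Rightarrow> real^'p \<Rightarrow> real" where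
  "lik sd h m b = (\<Prod>j<m. exp (- (snd (h j) - fst (h j) \<bullet> b)\<^sup>2 / (2 * sd\<^sup>2)))"

definition posterior :: "((real^'p::finite) \<Rightarrow> real) \<Rightarrow> real \<Rightarrow> (nat \<Rightarrow> (real^'p) \<times> real)
    \<Rightarrow> nat \<Rightarrow> (real^'p) measure" where
  "posterior prior sd h m = density lborel (\<lambda>b. ennreal
     (prior b * lik sd h m b / (\<integral>c. prior c * lik sd h m c \<partial>lborel)))"

definition tv_dist :: "'a measure \<Rightarrow> 'a measure \<Rightarrow> real" where
  "tv_dist M N = (SUP A \<in> sets M. \<bar>measure M A - measure N A\<bar>)"

definition outer_prob :: "'a measure \<Rightarrow> 'a set \<Rightarrow> real" where
  "outer_prob M S = Inf {measure M A | A. A \<in> sets M \<and> S \<inter> space M \<subseteq> A}"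

definition tends_to_zero_in_prob :: "(nat \<Rightarrow> 'a measure) \<Rightarrow> (nat \<Rightarrow> 'a \<Rightarrow> real) \<Rightarrow> bool" where
  "tends_to_zero_in_prob P Z \<longleftrightarrow>
     (\<forall>e>0. (\<lambda>n. outer_prob (P n) {h \<in> space (P n). \<bar>Z n h\<bar> > e}) \<longlonglongrightarrow> 0)"

definition tends_to_infinity_in_prob :: "(nat \<Rightarrow> 'a measure) \<Rightarrow> (nat \<Rightarrow> 'a \<Rightarrow> real) \<Rightarrow> bool" where
  "tends_to_infinity_in_prob P Z \<longleftrightarrow>
     (\<forall>K. (\<lambda>n. outer_prob (P n) {h \<in> space (P n). Z n h \<le> K}) \<longlonglongrightarrow> 0)"

end

theory Submission
  imports Defs
begin

lemma normal_kernel_meas: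
  fixes beta :: "real^'p::finite"
  assumes sd: "sd > 0"
  shows "(\<lambda>x::real^'p. density lborel (\<lambda>y. ennreal (normal_density (x \<bullet> beta) sd y))) \<in> borel \<rightarrow>\<^sub>M prob_algebra borel"
proof (rule measurable_prob_algebra_generated[where \<Omega>=UNIV and G="sets borel"])
  show "sets borel = sigma_sets UNIV (sets (borel::real measure))" by (simp add: sets.sigma_sets_eq[of borel, simplified])
  show "Int_stable (sets (borel::real measure))" by (auto simp: Int_stable_def)
  show "sets borel \<subseteq> Pow UNIV" by auto
  show "prob_space (density lborel (\<lambda>y. ennreal (normal_density (a \<bullet> beta) sd y)))" for a
    using prob_space_normal_density sd by simp
  show "sets (density lborel (\<lambda>y. ennreal (normal_density (a \<bullet> beta) sd y))) = sets borel" for a by simp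
  fix A :: "real set" assume A: "A \<in> sets borel"
  have "(\<lambda>a. \<integral>\<^sup>+ y. ennreal (normal_density (a \<bullet> beta) sd y) * indicator A y \<partial>lborel) \<in> borel_measurable borel"
    using A by (intro lborel.borel_measurable_nn_integral) (auto simp: normal_density_def)
  then show "(\<lambda>a. emeasure (density lborel (\<lambda>y. ennreal (normal_density (a \<bullet> beta) sd y))) A) \<in> borel_measurable borel"
    using A by (subst emeasure_density) auto
qed

lemma upd_meas:
  "(\<lambda>z. (fst (fst z))(j := (snd (fst z), snd z))) \<in> (hist_space j \<Otimes>\<^sub>M borel) \<Otimes>\<^sub>M (borel::real measure) \<rightarrow>\<^sub>M hist_space (Suc j)"
  unfolding hist_space_def
  apply (rule measurable_fun_upd[where J="{..<j}"])
    apply auto[1]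
   apply measurable
  done

lemma kern_meas:
  fixes Lam :: "nat \<Rightarrow> (nat \<Rightarrow> (real^'p::finite) \<times> real) \<Rightarrow> (real^'p) measure"
  assumes L: "Lam j \<in> hist_space j \<rightarrow>\<^sub>M prob_algebra borel" and sd: "sd > 0"
  shows "(\<lambda>h. Lam j h \<bind> (\<lambda>x. density lborel (\<lambda>y. ennreal (normal_density (x \<bullet> beta) sd y)) \<bind>
           (\<lambda>y. return (hist_space (Suc j)) (h(j := (x, y)))))) \<in> hist_space j \<rightarrow>\<^sub>M prob_algebra (hist_space (Suc j))"
proof (rule measurable_bind_prob_space2[OF L])
  show "(\<lambda>(h, x). density lborel (\<lambda>y. ennreal (normal_density (x \<bullet> beta) sd y)) \<bind>
           (\<lambda>y. return (hist_space (Suc j)) (h(j := (x, y))))) \<in> hist_space j \<Otimes>\<^sub>M borel \<rightarrow>\<^sub>M prob_algebra (hist_space (Suc j))"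
    apply (simp only: split_beta')
  proof (rule measurable_bind_prob_space2[where N=borel])
    show "(\<lambda>x. density lborel (\<lambda>y. ennreal (normal_density (snd x \<bullet> beta) sd y))) \<in> hist_space j \<Otimes>\<^sub>M borel \<rightarrow>\<^sub>M prob_algebra borel"
      by (rule measurable_compose[OF measurable_snd normal_kernel_meas[OF sd]])
    show "(\<lambda>(x, y). return (hist_space (Suc j)) ((fst x)(j := (snd x, y)))) \<in> (hist_space j \<Otimes>\<^sub>M borel) \<Otimes>\<^sub>M borel \<rightarrow>\<^sub>M prob_algebra (hist_space (Suc j))"
      using measurable_compose[OF upd_meas measurable_return_prob_space]
      by (simp add: split_beta')
  qed
qed


lemma traj_in_space:
  fixes Lam :: "nat \<Rightarrow> (nat \<Rightarrow> (real^'p::finite) \<times> real) \<Rightarrow> (real^'p) measure"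
  assumes L: "\<And>j. Lam j \<in> hist_space j \<rightarrow>\<^sub>M prob_algebra borel" and sd: "sd > 0"
  shows "traj Lam beta sd k \<in> space (prob_algebra (hist_space k))"
proof (induction k)
  case 0
  have "(\<lambda>_. undefined) \<in> space (hist_space 0 :: (nat \<Rightarrow> (real^'p) \<times> real) measure)"
    by (simp add: hist_space_def space_PiM)
  then show ?case
    by (auto simp: space_prob_algebra intro!: prob_space_return)
next
  case (Suc k)
  have "(\<lambda>M. M \<bind> (\<lambda>h. Lam k h \<bind> (\<lambda>x. density lborel (\<lambda>y. ennreal (normal_density (x \<bullet> beta) sd y)) \<bind>
           (\<lambda>y. return (hist_space (Suc k)) (h(k := (x, y))))))) \<in> prob_algebra (hist_space k) \<rightarrow>\<^sub>M prob_algebra (hist_space (Suc k))"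
    by (rule measurable_bind_prob_space[OF measurable_ident_sets[OF refl] kern_meas[OF L sd]])
  from measurable_space[OF this Suc.IH] show ?case by simp
qed

lemma traj_sets: 
  assumes L: "\<And>j. Lam j \<in> hist_space j \<rightarrow>\<^sub>M prob_algebra borel" and sd: "sd > 0"
  shows "sets (traj Lam beta sd k) = sets (hist_space k)"
  using traj_in_space[OF L sd, of beta k] by (simp add: space_prob_algebra)

lemma traj_prob:
  assumes L: "\<And>j. Lam j \<in> hist_space j \<rightarrow>\<^sub>M prob_algebra borel" and sd: "sd > 0"
  shows "prob_space (traj Lam beta sd k)"
  using traj_in_space[OF L sd, of beta k] by (simp add: space_prob_algebra)

lemma traj_space: 
  assumes L: "\<And>j. Lam j \<in> hist_space j \<rightarrow>\<^sub>M prob_algebra borel" and sd: "sd > 0"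
  shows "space (traj Lam beta sd k) = space (hist_space k)"
  using traj_sets[OF L sd] by (rule sets_eq_imp_space_eq)


lemma normal_mgf:
  assumes sd: "sd > 0"
  shows "(\<integral>\<^sup>+ y. ennreal (exp (a * (y - mu) - a\<^sup>2 * sd\<^sup>2 / 2)) \<partial>density lborel (\<lambda>y. ennreal (normal_density mu sd y))) = 1"
proof -
  have eq: "normal_density mu sd y * exp (a * (y - mu) - a\<^sup>2 * sd\<^sup>2 / 2) = normal_density (mu + a * sd\<^sup>2) sd y" for y
  proof -
    have "-(y - mu)\<^sup>2/ (2 * sd\<^sup>2) + (a * (y - mu) - a\<^sup>2 * sd\<^sup>2 / 2) = -(y - (mu + a * sd\<^sup>2))\<^sup>2/ (2 * sd\<^sup>2)"
      using sd by (simp add: field_simps power2_eq_square)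
    then show ?thesis unfolding normal_density_def
      by (simp add: exp_add[symmetric] mult.assoc)
  qed
  have "(\<integral>\<^sup>+ y. ennreal (exp (a * (y - mu) - a\<^sup>2 * sd\<^sup>2 / 2)) \<partial>density lborel (\<lambda>y. ennreal (normal_density mu sd y)))
      = (\<integral>\<^sup>+ y. ennreal (normal_density mu sd y) * ennreal (exp (a * (y - mu) - a\<^sup>2 * sd\<^sup>2 / 2)) \<partial>lborel)"
    by (subst nn_integral_density) auto
  also have "\<dots> = (\<integral>\<^sup>+ y. ennreal (normal_density (mu + a * sd\<^sup>2) sd y) \<partial>lborel)"
    by (intro nn_integral_cong) (simp add: eq[symmetric] ennreal_mult)
  also have "\<dots> = 1"
    using sd by (subst nn_integral_eq_integral) (auto intro: integrable_normal_density)
  finally show ?thesis .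
qed

lemma inner_kern_meas:
  fixes h :: "nat \<Rightarrow> (real^'p::finite) \<times> real"
  assumes h: "h \<in> space (hist_space k)" and sd: "sd > 0"
  shows "(\<lambda>x. density lborel (\<lambda>y. ennreal (normal_density (x \<bullet> beta) sd y)) \<bind>
           (\<lambda>y. return (hist_space (Suc k)) (h(k := (x, y))))) \<in> borel \<rightarrow>\<^sub>M prob_algebra (hist_space (Suc k))"
proof (rule measurable_bind_prob_space2[OF normal_kernel_meas[OF sd]])
  have "(\<lambda>z::(real^'p) \<times> real. h(k := (fst z, snd z))) \<in> borel \<Otimes>\<^sub>M borel \<rightarrow>\<^sub>M hist_space (Suc k)"
    unfolding hist_space_def
    apply (rule measurable_fun_upd[where J="{..<k}"])
      apply auto[1]
    using h unfolding hist_space_def apply simp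
    apply measurable
    done
  from measurable_compose[OF this measurable_return_prob_space]
  show "(\<lambda>(x, y). return (hist_space (Suc k)) (h(k := (x, y)))) \<in> borel \<Otimes>\<^sub>M borel \<rightarrow>\<^sub>M prob_algebra (hist_space (Suc k))"
    by (simp add: split_beta')
qed

lemma upd_space:
  assumes "h \<in> space (hist_space k)"
  shows "h(k := (x, y)) \<in> space (hist_space (Suc k))"
  using assms by (auto simp: hist_space_def space_PiM PiE_def extensional_def)

lemma exp_mart:
  fixes Lam :: "nat \<Rightarrow> (nat \<Rightarrow> (real^'p::finite) \<times> real) \<Rightarrow> (real^'p) measure"
    and g :: "real^'p \<Rightarrow> real \<Rightarrow> real"
  assumes L: "\<And>j. Lam j \<in> hist_space j \<rightarrow>\<^sub>M prob_algebra borel" and sd: "sd > 0"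
    and gm: "(\<lambda>z. g (fst z) (snd z)) \<in> borel_measurable (borel \<Otimes>\<^sub>M borel)"
    and gb: "\<And>x. (\<integral>\<^sup>+ y. ennreal (exp (g x y)) \<partial>density lborel (\<lambda>y. ennreal (normal_density (x \<bullet> beta) sd y))) \<le> 1"
  shows "(\<integral>\<^sup>+ h. ennreal (exp (\<Sum>j<k. g (fst (h j)) (snd (h j)))) \<partial>traj Lam beta sd k) \<le> 1"
proof (induction k)
  case 0
  have "prob_space (traj Lam beta sd 0)" by (rule traj_prob[OF L sd])
  then show ?case by (simp split: split_indicator)
next
  case (Suc k)
  define A where "A h = (\<Sum>j<k. g (fst (h j)) (snd (h j)))" for h :: "nat \<Rightarrow> (real^'p) \<times> real"
  define K where "K h = Lam k h \<bind> (\<lambda>x. density lborel (\<lambda>y. ennreal (normal_density (x \<bullet> beta) sd y)) \<bind>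
           (\<lambda>y. return (hist_space (Suc k)) (h(k := (x, y)))))" for h
  have Km: "K \<in> traj Lam beta sd k \<rightarrow>\<^sub>M subprob_algebra (hist_space (Suc k))"
    unfolding K_def
    by (rule measurable_prob_algebraD, subst measurable_cong_sets[OF traj_sets[OF L sd] refl], rule kern_meas[OF L sd])
  have Fm: "(\<lambda>h. ennreal (exp (\<Sum>j<Suc k. g (fst (h j)) (snd (h j))))) \<in> borel_measurable (hist_space (Suc k))"
  proof -
    have "(\<lambda>h::nat \<Rightarrow> (real^'p) \<times> real. g (fst (h j)) (snd (h j))) \<in> borel_measurable (hist_space (Suc k))" if "j < Suc k" for j
    proof -
      have "(\<lambda>h::nat \<Rightarrow> (real^'p) \<times> real. h j) \<in> hist_space (Suc k) \<rightarrow>\<^sub>M (borel :: ((real^'p) \<times> real) measure)"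
        unfolding hist_space_def using that by (intro measurable_component_singleton) auto
      then have "(\<lambda>h::nat \<Rightarrow> (real^'p) \<times> real. h j) \<in> hist_space (Suc k) \<rightarrow>\<^sub>M (borel::(real^'p) measure) \<Otimes>\<^sub>M (borel::real measure)"
        by (simp add: borel_prod)
      from measurable_compose[OF this gm] show ?thesis by simp
    qed
    then show ?thesis by measurable
  qed
  have step: "(\<integral>\<^sup>+ h'. ennreal (exp (\<Sum>j<Suc k. g (fst (h' j)) (snd (h' j)))) \<partial>K h) \<le> ennreal (exp (A h))"
    if h: "h \<in> space (hist_space k)" for h
  proof -
    have Am: "A (h(k := (x, y))) = A h" for x y unfolding A_def by (intro sum.cong) auto
    have inner: "(\<integral>\<^sup>+ h'. ennreal (exp (\<Sum>j<Suc k. g (fst (h' j)) (snd (h' j)))) \<partial>(density lborel (\<lambda>y. ennreal (normal_density (x \<bullet> beta) sd y)) \<bind>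
           (\<lambda>y. return (hist_space (Suc k)) (h(k := (x, y)))))) \<le> ennreal (exp (A h))" for x
    proof -
      have m2: "(\<lambda>y. return (hist_space (Suc k)) (h(k := (x, y)))) \<in> density lborel (\<lambda>y. ennreal (normal_density (x \<bullet> beta) sd y)) \<rightarrow>\<^sub>M subprob_algebra (hist_space (Suc k))"
      proof -
        have "(\<lambda>y::real. h(k := (x, y))) \<in> borel \<rightarrow>\<^sub>M hist_space (Suc k)"
          unfolding hist_space_def
          apply (rule measurable_fun_upd[where J="{..<k}"])
            apply auto[1]
          using h unfolding hist_space_def apply simp
          apply measurable
          done
        from measurable_compose[OF this return_measurable] show ?thesis
          by (simp cong: measurable_cong_sets)
      qed
      have "(\<integral>\<^sup>+ h'. ennreal (exp (\<Sum>j<Suc k. g (fst (h' j)) (snd (h' j)))) \<partial>(density lborel (\<lambda>y. ennreal (normal_density (x \<bullet> beta) sd y)) \<bind>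
           (\<lambda>y. return (hist_space (Suc k)) (h(k := (x, y))))))
        = (\<integral>\<^sup>+ y. (\<integral>\<^sup>+ h'. ennreal (exp (\<Sum>j<Suc k. g (fst (h' j)) (snd (h' j)))) \<partial>return (hist_space (Suc k)) (h(k := (x, y)))) \<partial>density lborel (\<lambda>y. ennreal (normal_density (x \<bullet> beta) sd y)))"
        by (rule nn_integral_bind[OF Fm m2])
      also have "\<dots> = (\<integral>\<^sup>+ y. ennreal (exp (A h)) * ennreal (exp (g x y)) \<partial>density lborel (\<lambda>y. ennreal (normal_density (x \<bullet> beta) sd y)))"
      proof (intro nn_integral_cong)
        fix y
        have "(\<integral>\<^sup>+ h'. ennreal (exp (\<Sum>j<Suc k. g (fst (h' j)) (snd (h' j)))) \<partial>return (hist_space (Suc k)) (h(k := (x, y))))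
           = ennreal (exp (\<Sum>j<Suc k. g (fst ((h(k := (x, y))) j)) (snd ((h(k := (x, y))) j))))"
          by (rule nn_integral_return[OF upd_space[OF h] Fm])
        also have "(\<Sum>j<Suc k. g (fst ((h(k := (x, y))) j)) (snd ((h(k := (x, y))) j))) = A h + g x y"
          using Am[of x y] by (simp add: A_def)
        finally show "(\<integral>\<^sup>+ h'. ennreal (exp (\<Sum>j<Suc k. g (fst (h' j)) (snd (h' j)))) \<partial>return (hist_space (Suc k)) (h(k := (x, y))))
           = ennreal (exp (A h)) * ennreal (exp (g x y))"
          unfolding exp_add ennreal_mult[OF exp_ge_zero exp_ge_zero] .
      qed
      also have "\<dots> = ennreal (exp (A h)) * (\<integral>\<^sup>+ y. ennreal (exp (g x y)) \<partial>density lborel (\<lambda>y. ennreal (normal_density (x \<bullet> beta) sd y)))"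
      proof (rule nn_integral_cmult)
        have gx[measurable]: "g x \<in> borel_measurable borel"
          using measurable_compose[OF measurable_Pair1'[of x borel borel] gm] by simp
        show "(\<lambda>y. ennreal (exp (g x y))) \<in> borel_measurable (density lborel (\<lambda>y. ennreal (normal_density (x \<bullet> beta) sd y)))"
          by measurable
      qed
      also have "\<dots> \<le> ennreal (exp (A h)) * 1"
        by (intro mult_left_mono gb) auto
      finally show ?thesis by simp
    qed
    have m1: "(\<lambda>x. density lborel (\<lambda>y. ennreal (normal_density (x \<bullet> beta) sd y)) \<bind>
           (\<lambda>y. return (hist_space (Suc k)) (h(k := (x, y))))) \<in> Lam k h \<rightarrow>\<^sub>M subprob_algebra (hist_space (Suc k))"
    proof -
      have "Lam k h \<in> space (prob_algebra borel)" using measurable_space[OF L h] .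
      then have "sets (Lam k h) = sets borel" by (simp add: space_prob_algebra)
      then show ?thesis
        by (subst measurable_cong_sets[OF \<open>sets (Lam k h) = sets borel\<close> refl])
           (rule measurable_prob_algebraD[OF inner_kern_meas[OF h sd]])
    qed
    have plam: "prob_space (Lam k h)" using measurable_space[OF L h] by (simp add: space_prob_algebra)
    have "(\<integral>\<^sup>+ h'. ennreal (exp (\<Sum>j<Suc k. g (fst (h' j)) (snd (h' j)))) \<partial>K h)
       = (\<integral>\<^sup>+ x. (\<integral>\<^sup>+ h'. ennreal (exp (\<Sum>j<Suc k. g (fst (h' j)) (snd (h' j)))) \<partial>(density lborel (\<lambda>y. ennreal (normal_density (x \<bullet> beta) sd y)) \<bind>
           (\<lambda>y. return (hist_space (Suc k)) (h(k := (x, y)))))) \<partial>Lam k h)"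
      unfolding K_def by (rule nn_integral_bind[OF Fm m1])
    also have "\<dots> \<le> (\<integral>\<^sup>+ x. ennreal (exp (A h)) \<partial>Lam k h)"
      by (intro nn_integral_mono inner)
    also have "\<dots> = ennreal (exp (A h))"
      using plam by (simp add: prob_space.emeasure_space_1)
    finally show ?thesis .
  qed
  have "(\<integral>\<^sup>+ h'. ennreal (exp (\<Sum>j<Suc k. g (fst (h' j)) (snd (h' j)))) \<partial>traj Lam beta sd (Suc k))
     = (\<integral>\<^sup>+ h. (\<integral>\<^sup>+ h'. ennreal (exp (\<Sum>j<Suc k. g (fst (h' j)) (snd (h' j)))) \<partial>K h) \<partial>traj Lam beta sd k)"
    unfolding traj.simps K_def[symmetric] by (rule nn_integral_bind[OF Fm Km])
  also have "\<dots> \<le> (\<integral>\<^sup>+ h. ennreal (exp (A h)) \<partial>traj Lam beta sd k)"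
    by (intro nn_integral_mono step) (simp add: traj_space[OF L sd])
  also have "\<dots> \<le> 1" using Suc.IH by (simp add: A_def)
  finally show ?case .
qed


definition phi :: "real^'p::finite \<Rightarrow> ('p \<Rightarrow> real) \<Rightarrow> real^'p \<Rightarrow> real" where
  "phi c s b = (\<Prod>i\<in>UNIV. normal_density (c$i) (s i) (b$i))"

lemma Basis_vec_range: "(Basis :: (real^'p::finite) set) = range (\<lambda>i. axis i 1)"
  by (auto simp: Basis_vec_def)

lemma axis_index_axis: "axis_index (axis i (1::real)) = i"
  by (metis (mono_tags, lifting) axis_eq_axis axis_index axis_inverse one_neq_zero Basis_vec_range rangeI)

lemma prod_Basis_vec:
  "(\<Prod>u\<in>(Basis :: (real^'p::finite) set). f u) = (\<Prod>i\<in>UNIV. f (axis i 1))"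
proof -
  have "inj (\<lambda>i::'p. axis i (1::real))" by (auto simp: inj_on_def axis_eq_axis)
  then show ?thesis unfolding Basis_vec_range by (simp add: prod.reindex)
qed

lemma nn_integral_prod_vec:
  fixes f :: "'p::finite \<Rightarrow> real \<Rightarrow> ennreal"
  assumes [measurable]: "\<And>i. f i \<in> borel_measurable borel"
  shows "(\<integral>\<^sup>+ b. (\<Prod>i\<in>UNIV. f i ((b::real^'p)$i)) \<partial>lborel) = (\<Prod>i\<in>UNIV. \<integral>\<^sup>+ x. f i x \<partial>lborel)"
proof -
  have "(\<integral>\<^sup>+ b. (\<Prod>u\<in>Basis. f (axis_index u) ((b::real^'p) \<bullet> u)) \<partial>lborel) = (\<Prod>u\<in>(Basis :: (real^'p) set). (\<integral>\<^sup>+x. f (axis_index u) x \<partial>lborel))"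
    by (rule nn_integral_lborel_prod) auto
  then show ?thesis
    by (simp add: prod_Basis_vec axis_index_axis cart_eq_inner_axis[symmetric])
qed

lemma phi_nonneg: "phi c s b \<ge> 0"
  unfolding phi_def by (intro prod_nonneg) auto

lemma phi_meas[measurable]: "phi c s \<in> borel_measurable borel"
  unfolding phi_def by measurable

lemma phi_nn_integral:
  fixes c :: "real^'p::finite" and s :: "'p \<Rightarrow> real"
  assumes s: "\<And>i. s i > 0"
  shows "(\<integral>\<^sup>+ b. ennreal (phi c s b) \<partial>lborel) = 1"
proof -
  have "(\<integral>\<^sup>+ b. ennreal (phi c s b) \<partial>lborel) = (\<integral>\<^sup>+ b. (\<Prod>i\<in>UNIV. ennreal (normal_density (c$i) (s i) (b$i))) \<partial>lborel)"
    unfolding phi_def by (intro nn_integral_cong) (simp add: prod_ennreal)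
  also have "\<dots> = (\<Prod>i\<in>UNIV. \<integral>\<^sup>+ x. ennreal (normal_density (c$i) (s i) x) \<partial>lborel)"
    by (rule nn_integral_prod_vec) simp
  also have "\<dots> = (\<Prod>i\<in>(UNIV::'p set). 1)"
  proof (intro prod.cong refl)
    fix i
    show "(\<integral>\<^sup>+ x. ennreal (normal_density (c$i) (s i) x) \<partial>lborel) = 1"
      using s[of i] by (subst nn_integral_eq_integral) (auto intro: integrable_normal_density)
  qed
  finally show ?thesis by simp
qed

lemma phi_integrable:
  fixes c :: "real^'p::finite" and s :: "'p \<Rightarrow> real"
  assumes s: "\<And>i. s i > 0"
  shows "integrable lborel (phi c s)"
  using phi_nn_integral[of s c] s phi_nonneg
  by (intro integrableI_nonneg) (auto intro!: AE_I2)

lemma phi_integral: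
  fixes c :: "real^'p::finite" and s :: "'p \<Rightarrow> real"
  assumes s: "\<And>i. s i > 0"
  shows "(\<integral>b. phi c s b \<partial>lborel) = 1"
proof -
  have i: "integrable lborel (phi c s)" using phi_integrable[of s c] s by blast
  have "(\<integral>\<^sup>+ b. ennreal (phi c s b) \<partial>lborel) = 1" using phi_nn_integral[of s c] s by blast
  then have "ennreal (\<integral>b. phi c s b \<partial>lborel) = 1"
    using i phi_nonneg by (subst (asm) nn_integral_eq_integral) auto
  then show ?thesis by simp
qed


lemma nd_split:
  assumes "\<sigma> > 0"
  shows "normal_density \<mu> \<sigma> x = sqrt 2 * exp (-(x-\<mu>)\<^sup>2 / (4*\<sigma>\<^sup>2)) * normal_density \<mu> (sqrt 2 * \<sigma>) x"
proof -
  have e: "exp (-(x-\<mu>)\<^sup>2 / (2*\<sigma>\<^sup>2)) = exp (-(x-\<mu>)\<^sup>2 / (4*\<sigma>\<^sup>2)) * exp (-(x - \<mu>)\<^sup>2 / (2 * (sqrt 2 * \<sigma>)\<^sup>2))"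
    unfolding exp_add[symmetric] using assms by (simp add: power_mult_distrib field_simps)
  have s: "sqrt (2 * pi * (sqrt 2 * \<sigma>)\<^sup>2) = sqrt 2 * sqrt (2 * pi * \<sigma>\<^sup>2)"
    by (simp add: power_mult_distrib real_sqrt_mult)
  show ?thesis unfolding normal_density_def s e using assms by (simp add: field_simps)
qed

lemma norm_sq_vec: "(norm (x::real^'p::finite))\<^sup>2 = (\<Sum>i\<in>UNIV. (x$i)\<^sup>2)"
  unfolding power2_norm_eq_inner inner_vec_def by (simp add: power2_eq_square)

lemma phi_tail:
  fixes c :: "real^'p::finite" and s :: "'p \<Rightarrow> real"
  assumes s: "\<And>i. 0 < s i" "\<And>i. s i \<le> \<delta>"
  shows "phi c s b \<le> sqrt 2 ^ CARD('p) * exp (-(norm (b - c))\<^sup>2 / (4*\<delta>\<^sup>2)) * phi c (\<lambda>i. sqrt 2 * s i) b"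
proof -
  have d: "\<delta> > 0" using s(1)[of undefined] s(2)[of undefined] by linarith
  have "phi c s b = (\<Prod>i\<in>UNIV. sqrt 2 * exp (-(b$i-c$i)\<^sup>2 / (4*(s i)\<^sup>2)) * normal_density (c$i) (sqrt 2 * s i) (b$i))"
    unfolding phi_def using s(1) by (intro prod.cong refl nd_split)
  also have "\<dots> \<le> (\<Prod>i\<in>UNIV. sqrt 2 * exp (-(b$i-c$i)\<^sup>2 / (4*\<delta>\<^sup>2)) * normal_density (c$i) (sqrt 2 * s i) (b$i))"
  proof (intro prod_mono conjI)
    fix i
    have "(b$i-c$i)\<^sup>2 / (4*\<delta>\<^sup>2) \<le> (b$i-c$i)\<^sup>2 / (4*(s i)\<^sup>2)"
      using s(1)[of i] s(2)[of i] by (intro divide_left_mono mult_left_mono power_mono mult_pos_pos) auto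
    then show "sqrt 2 * exp (-(b$i-c$i)\<^sup>2 / (4*(s i)\<^sup>2)) * normal_density (c$i) (sqrt 2 * s i) (b$i)
      \<le> sqrt 2 * exp (-(b$i-c$i)\<^sup>2 / (4*\<delta>\<^sup>2)) * normal_density (c$i) (sqrt 2 * s i) (b$i)"
      by (intro mult_right_mono mult_left_mono) auto
  qed auto
  also have "\<dots> = sqrt 2 ^ CARD('p) * (\<Prod>i\<in>UNIV. exp (-(b$i-c$i)\<^sup>2 / (4*\<delta>\<^sup>2))) * phi c (\<lambda>i. sqrt 2 * s i) b"
    unfolding phi_def by (simp add: prod.distrib)
  also have "(\<Prod>i\<in>UNIV. exp (-(b$i-c$i)\<^sup>2 / (4*\<delta>\<^sup>2))) = exp (-(norm (b - c))\<^sup>2 / (4*\<delta>\<^sup>2))"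
    by (simp add: exp_sum[symmetric] norm_sq_vec sum_divide_distrib[symmetric] sum_negf)
  finally show ?thesis .
qed


lemma exp_neg_le_inv: "(t::real) > 0 \<Longrightarrow> exp (- t) \<le> 1 / t"
proof -
  assume t: "t > 0"
  have "1 + t \<le> exp t" by (rule exp_ge_add_one_self)
  then have "t \<le> exp t" by linarith
  then show ?thesis using t by (simp add: exp_minus field_simps)
qed

lemma prior_phi_integrable:
  fixes prior :: "real^'p::finite \<Rightarrow> real" and c :: "real^'p" and s :: "'p \<Rightarrow> real"
  assumes pm: "prior \<in> borel_measurable borel" and pb: "\<And>b. \<bar>prior b\<bar> \<le> B"
    and s: "\<And>i. s i > 0"
  shows "integrable lborel (\<lambda>b. prior b * phi c s b)"
proof (rule Bochner_Integration.integrable_bound[where f="\<lambda>b. B * phi c s b"])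
  show "integrable lborel (\<lambda>b. B * phi c s b)" using phi_integrable[of s c] s by auto
  show "(\<lambda>b. prior b * phi c s b) \<in> borel_measurable lborel" using pm by measurable
  show "AE x in lborel. norm (prior x * phi c s x) \<le> norm (B * phi c s x)"
  proof (intro AE_I2)
    fix x
    have "\<bar>prior x\<bar> * phi c s x \<le> B * phi c s x" using pb[of x] phi_nonneg[of c s x] by (intro mult_right_mono) auto
    then show "norm (prior x * phi c s x) \<le> norm (B * phi c s x)"
      using phi_nonneg[of c s x] by (simp add: abs_mult) (smt (verit) mult_right_mono abs_ge_self)
  qed
qed

lemma analytic:
  fixes prior :: "real^'p::finite \<Rightarrow> real" and beta0 :: "real^'p"
  assumes pn: "\<And>b. prior b \<ge> 0" and pc: "continuous_on UNIV prior"
    and pbd: "\<exists>B. \<forall>b. prior b \<le> B" and pp: "prior beta0 > 0" and e: "e > 0"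
  shows "\<exists>\<delta>>0. \<exists>\<epsilon>>0. \<forall>c s. (\<forall>i. 0 < s i \<and> s i \<le> \<delta>) \<longrightarrow> (\<forall>i. \<bar>c$i - beta0$i\<bar> \<le> \<epsilon>) \<longrightarrow>
     (\<integral>b. prior b * phi c s b \<partial>lborel) > 0 \<and>
     (\<integral>b. \<bar>prior b * phi c s b / (\<integral>b. prior b * phi c s b \<partial>lborel) - phi c s b\<bar> \<partial>lborel) \<le> e"
proof -
  obtain B where B: "\<And>b. prior b \<le> B" using pbd by blast
  define p0 where "p0 = prior beta0"
  have p0: "p0 > 0" using pp by (simp add: p0_def)
  have Bp: "B \<ge> p0" using B[of beta0] by (simp add: p0_def)
  have pm: "prior \<in> borel_measurable borel" using pc by (rule borel_measurable_continuous_onI)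
  have pab: "\<bar>prior b\<bar> \<le> B" for b using pn[of b] B[of b] by simp
  define D0 where "D0 = min (p0/4) (e*p0/4)"
  have D0: "D0 > 0" "D0 \<le> p0/4" "D0 \<le> e*p0/4" using p0 e by (auto simp: D0_def)
  define \<eta> where "\<eta> = D0/2"
  have eta: "\<eta> > 0" using D0 by (simp add: \<eta>_def)
  obtain r where r: "r > 0" and rc: "\<And>b. dist b beta0 < r \<Longrightarrow> dist (prior b) p0 < \<eta>"
    using pc eta unfolding continuous_on_iff p0_def by (metis UNIV_I dist_commute)
  define C where "C = (B + p0) * sqrt 2 ^ CARD('p)"
  have C: "C > 0" using Bp p0 by (simp add: C_def)
  define \<delta> where "\<delta> = sqrt (r\<^sup>2 * \<eta> / (16 * C))"
  have d: "\<delta> > 0" using r eta C by (simp add: \<delta>_def)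
  have dsq: "\<delta>\<^sup>2 = r\<^sup>2 * \<eta> / (16 * C)" using r eta C by (simp add: \<delta>_def)
  have tailC: "C * exp (-(r/2)\<^sup>2 / (4*\<delta>\<^sup>2)) \<le> \<eta>"
  proof -
    have t: "(r/2)\<^sup>2 / (4*\<delta>\<^sup>2) = C / \<eta>" using r eta C unfolding dsq by (simp add: field_simps power2_eq_square)
    have "exp (-((r/2)\<^sup>2 / (4*\<delta>\<^sup>2))) \<le> 1 / (C / \<eta>)"
      unfolding t using C eta by (intro exp_neg_le_inv) auto
    then have "C * exp (-((r/2)\<^sup>2 / (4*\<delta>\<^sup>2))) \<le> C * (1 / (C / \<eta>))" using C by (intro mult_left_mono) auto
    then show ?thesis using C eta by simp
  qed
  define \<epsilon> where "\<epsilon> = r / (2 * real CARD('p))"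
  have eps: "\<epsilon> > 0" using r by (simp add: \<epsilon>_def)
  show ?thesis
  proof (rule exI[of _ \<delta>], intro conjI d, rule exI[of _ \<epsilon>], rule conjI[OF eps], intro allI impI, goal_cases)
    case (1 c s)
    note sA = 1(1) and cA = 1(2)
    have s: "\<And>i. 0 < s i" "\<And>i. s i \<le> \<delta>" using sA by auto
    have s2: "\<And>i. 0 < sqrt 2 * s i" using s by simp
    have cb: "norm (c - beta0) \<le> r/2"
    proof -
      have "norm (c - beta0) \<le> (\<Sum>i\<in>UNIV. \<bar>(c - beta0)$i\<bar>)" by (rule norm_le_l1_cart)
      also have "\<dots> \<le> (\<Sum>i\<in>(UNIV::'p set). \<epsilon>)" using cA by (intro sum_mono) auto
      also have "\<dots> = r/2" by (simp add: \<epsilon>_def)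
      finally show ?thesis .
    qed
    define f where "f b = prior b * phi c s b" for b
    have fi: "integrable lborel f" unfolding f_def using prior_phi_integrable[OF pm pab s(1)] .
    have phii: "integrable lborel (phi c s)" using phi_integrable[of s c] s by blast
    have phi2i: "integrable lborel (phi c (\<lambda>i. sqrt 2 * s i))" using phi_integrable[of "\<lambda>i. sqrt 2 * s i" c] s2 by blast
    have phiint: "(\<integral>b. phi c s b \<partial>lborel) = 1" using phi_integral[of s c] s by blast
    have phi2int: "(\<integral>b. phi c (\<lambda>i. sqrt 2 * s i) b \<partial>lborel) = 1" using phi_integral[of "\<lambda>i. sqrt 2 * s i" c] s2 by blast
    define g where "g b = \<bar>prior b - p0\<bar> * phi c s b" for b
    have gi: "integrable lborel g" unfolding g_def
    proof (rule prior_phi_integrable[of _ "B + p0"])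
      show "(\<lambda>b. \<bar>prior b - p0\<bar>) \<in> borel_measurable borel" using pm by measurable
      show "\<bar>\<bar>prior b - p0\<bar>\<bar> \<le> B + p0" for b using pn[of b] B[of b] p0 by linarith
    qed (use s in auto)
    have pw: "g b \<le> \<eta> * phi c s b + C * exp (-(r/2)\<^sup>2 / (4*\<delta>\<^sup>2)) * phi c (\<lambda>i. sqrt 2 * s i) b" for b
    proof (cases "dist b beta0 < r")
      case True
      then have "\<bar>prior b - p0\<bar> \<le> \<eta>" using rc[of b] by (simp add: dist_real_def)
      then have "g b \<le> \<eta> * phi c s b" unfolding g_def using phi_nonneg[of c s b] by (intro mult_right_mono) auto
      moreover have "0 \<le> C * exp (-(r/2)\<^sup>2 / (4*\<delta>\<^sup>2)) * phi c (\<lambda>i. sqrt 2 * s i) b"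
        using C phi_nonneg[of c "\<lambda>i. sqrt 2 * s i" b] by simp
      ultimately show ?thesis by linarith
    next
      case False
      then have "norm (b - beta0) \<ge> r" by (simp add: dist_norm)
      then have nb: "norm (b - c) \<ge> r/2" using cb norm_triangle_ineq[of "b - c" "c - beta0"] by simp
      have "(r/2)\<^sup>2 / (4*\<delta>\<^sup>2) \<le> (norm (b - c))\<^sup>2 / (4*\<delta>\<^sup>2)"
        using nb r d by (intro divide_right_mono power_mono) auto
      then have ex: "exp (-(norm (b - c))\<^sup>2 / (4*\<delta>\<^sup>2)) \<le> exp (-(r/2)\<^sup>2 / (4*\<delta>\<^sup>2))" by simp
      have "phi c s b \<le> sqrt 2 ^ CARD('p) * exp (-(norm (b - c))\<^sup>2 / (4*\<delta>\<^sup>2)) * phi c (\<lambda>i. sqrt 2 * s i) b"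
        by (rule phi_tail[OF s])
      also have "\<dots> \<le> sqrt 2 ^ CARD('p) * exp (-(r/2)\<^sup>2 / (4*\<delta>\<^sup>2)) * phi c (\<lambda>i. sqrt 2 * s i) b"
        using ex phi_nonneg by (intro mult_right_mono mult_left_mono) auto
      finally have ph: "phi c s b \<le> sqrt 2 ^ CARD('p) * exp (-(r/2)\<^sup>2 / (4*\<delta>\<^sup>2)) * phi c (\<lambda>i. sqrt 2 * s i) b" .
      have "\<bar>prior b - p0\<bar> \<le> B + p0" using pn[of b] B[of b] p0 by linarith
      then have "g b \<le> (B + p0) * phi c s b" unfolding g_def using phi_nonneg[of c s b] by (intro mult_right_mono) auto
      also have "\<dots> \<le> (B + p0) * (sqrt 2 ^ CARD('p) * exp (-(r/2)\<^sup>2 / (4*\<delta>\<^sup>2)) * phi c (\<lambda>i. sqrt 2 * s i) b)"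
        using ph Bp p0 by (intro mult_left_mono) auto
      also have "\<dots> = C * exp (-(r/2)\<^sup>2 / (4*\<delta>\<^sup>2)) * phi c (\<lambda>i. sqrt 2 * s i) b" by (simp add: C_def)
      finally show ?thesis using eta phi_nonneg[of c s b] by (smt (verit) mult_nonneg_nonneg)
    qed
    define D where "D = (\<integral>b. g b \<partial>lborel)"
    have "D \<le> (\<integral>b. \<eta> * phi c s b + C * exp (-(r/2)\<^sup>2 / (4*\<delta>\<^sup>2)) * phi c (\<lambda>i. sqrt 2 * s i) b \<partial>lborel)"
      unfolding D_def using gi phii phi2i by (intro integral_mono pw) auto
    also have "\<dots> = \<eta> + C * exp (-(r/2)\<^sup>2 / (4*\<delta>\<^sup>2))"
      using phii phi2i by (simp add: phiint phi2int)
    also have "\<dots> \<le> D0" using tailC by (simp add: \<eta>_def)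
    finally have DD0: "D \<le> D0" .
    have D_nonneg: "D \<ge> 0" unfolding D_def g_def using phi_nonneg[of c s] by (intro integral_nonneg_AE AE_I2) auto
    define Z where "Z = (\<integral>b. f b \<partial>lborel)"
    have "Z - p0 = (\<integral>b. (prior b - p0) * phi c s b \<partial>lborel)"
    proof -
      have "(\<integral>b. (prior b - p0) * phi c s b \<partial>lborel) = (\<integral>b. f b - p0 * phi c s b \<partial>lborel)"
        by (simp add: f_def left_diff_distrib)
      also have "\<dots> = Z - p0 * (\<integral>b. phi c s b \<partial>lborel)"
        using fi phii by (simp add: Z_def)
      finally show ?thesis using phiint by simp
    qed
    also have "\<bar>\<dots>\<bar> \<le> D" unfolding D_def g_def
      using integral_abs_bound[of lborel "\<lambda>b. (prior b - p0) * phi c s b"] phi_nonneg[of c s]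
      by (simp add: abs_mult)
    finally have ZD: "\<bar>Z - p0\<bar> \<le> D" .
    have Zpos: "Z \<ge> 3/4 * p0" using ZD DD0 D0 by linarith
    then have Z0: "Z > 0" using p0 by linarith
    have pw2: "\<bar>f b / Z - phi c s b\<bar> \<le> (g b + \<bar>Z - p0\<bar> * phi c s b) / Z" for b
    proof -
      have "f b / Z - phi c s b = ((prior b - p0) * phi c s b + (p0 - Z) * phi c s b) / Z"
        using Z0 unfolding f_def by (simp add: field_simps)
      also have "\<bar>\<dots>\<bar> \<le> (g b + \<bar>Z - p0\<bar> * phi c s b) / Z"
        unfolding g_def using Z0 phi_nonneg[of c s b]
        by (simp add: abs_mult divide_right_mono abs_triangle_ineq[THEN order_trans] abs_minus_commute)
      finally show ?thesis .
    qed
    have "(\<integral>b. \<bar>f b / Z - phi c s b\<bar> \<partial>lborel) \<le> (\<integral>b. (g b + \<bar>Z - p0\<bar> * phi c s b) / Z \<partial>lborel)"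
      using gi phii fi by (intro integral_mono pw2) auto
    also have "\<dots> = (D + \<bar>Z - p0\<bar>) / Z"
      using gi phii phiint by (simp add: D_def)
    also have "\<dots> \<le> (D0 + D0) / (3/4 * p0)"
      using ZD DD0 Zpos Z0 D_nonneg p0 D0 by (intro frac_le) auto
    also have "\<dots> \<le> e" using D0 p0 e by (simp add: field_simps)
    finally have "(\<integral>b. \<bar>f b / Z - phi c s b\<bar> \<partial>lborel) \<le> e" .
    then show ?case using Z0 by (simp add: f_def Z_def)
  qed
qed


lemma ind_int:
  fixes f :: "'a::euclidean_space \<Rightarrow> real"
  shows "integrable lborel f \<Longrightarrow> A \<in> sets borel \<Longrightarrow> integrable lborel (\<lambda>x. indicator A x * f x)"
  using integrable_real_mult_indicator[of A lborel f] by (simp add: mult.commute)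

lemma measure_density_real:
  fixes f :: "'a::euclidean_space \<Rightarrow> real"
  assumes f: "integrable lborel f" "\<And>x. f x \<ge> 0" and A: "A \<in> sets borel"
  shows "measure (density lborel (\<lambda>x. ennreal (f x))) A = (\<integral>x. indicator A x * f x \<partial>lborel)"
proof -
  have i: "integrable lborel (\<lambda>x. indicator A x * f x)"
    using f(1) A by (rule ind_int)
  have "emeasure (density lborel (\<lambda>x. ennreal (f x))) A = (\<integral>\<^sup>+ x. ennreal (f x) * indicator A x \<partial>lborel)"
    using A f by (subst emeasure_density) (auto simp: borel_measurable_integrable)
  also have "\<dots> = (\<integral>\<^sup>+ x. ennreal (indicator A x * f x) \<partial>lborel)"
    by (intro nn_integral_cong) (simp split: split_indicator)
  also have "\<dots> = ennreal (\<integral>x. indicator A x * f x \<partial>lborel)"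
    using i f(2) by (intro nn_integral_eq_integral) auto
  finally show ?thesis unfolding measure_def
    using f(2) by (simp add: integral_nonneg_AE)
qed

lemma tv_elem:
  fixes f g :: "'a::euclidean_space \<Rightarrow> real"
  assumes f: "integrable lborel f" "\<And>x. f x \<ge> 0" and g: "integrable lborel g" "\<And>x. g x \<ge> 0"
    and A: "A \<in> sets borel"
  shows "\<bar>measure (density lborel (\<lambda>x. ennreal (f x))) A - measure (density lborel (\<lambda>x. ennreal (g x))) A\<bar>
     \<le> (\<integral>x. \<bar>f x - g x\<bar> \<partial>lborel)"
proof -
  have "measure (density lborel (\<lambda>x. ennreal (f x))) A - measure (density lborel (\<lambda>x. ennreal (g x))) A
     = (\<integral>x. indicator A x * (f x - g x) \<partial>lborel)"
    using f g A
    by (simp add: measure_density_real right_diff_distrib ind_int)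
  also have "\<bar>\<dots>\<bar> \<le> (\<integral>x. \<bar>indicator A x * (f x - g x)\<bar> \<partial>lborel)"
    by (rule integral_abs_bound)
  also have "\<dots> \<le> (\<integral>x. \<bar>f x - g x\<bar> \<partial>lborel)"
    using f g A by (intro integral_mono) (auto simp: abs_mult ind_int split: split_indicator)
  finally show ?thesis .
qed

lemma tv_bound_abs:
  fixes f g :: "'a::euclidean_space \<Rightarrow> real"
  assumes f: "integrable lborel f" "\<And>x. f x \<ge> 0" and g: "integrable lborel g" "\<And>x. g x \<ge> 0"
    and le: "(\<integral>x. \<bar>f x - g x\<bar> \<partial>lborel) \<le> e"
  shows "\<bar>tv_dist (density lborel (\<lambda>x. ennreal (f x))) (density lborel (\<lambda>x. ennreal (g x)))\<bar> \<le> e"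
proof -
  let ?M = "density lborel (\<lambda>x. ennreal (f x))" and ?N = "density lborel (\<lambda>x. ennreal (g x))"
  have el: "\<bar>measure ?M A - measure ?N A\<bar> \<le> e" if "A \<in> sets ?M" for A
    using tv_elem[OF f g, of A] that le by simp
  have up: "tv_dist ?M ?N \<le> e"
    unfolding tv_dist_def by (rule cSUP_least) (use el in auto)
  have bdd: "bdd_above ((\<lambda>A. \<bar>measure ?M A - measure ?N A\<bar>) ` sets ?M)"
    using el by (intro bdd_aboveI2) auto
  have "0 \<le> tv_dist ?M ?N"
    unfolding tv_dist_def
    by (rule cSUP_upper2[OF bdd, of "{}"]) auto
  then show ?thesis using up by simp
qed


definition diag :: "('p::finite \<Rightarrow> real) \<Rightarrow> real^'p^'p" where
  "diag d = (\<chi> a b. if a = b then d a else 0)"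

lemma sum_delta_mult: "(\<Sum>k\<in>(UNIV::'p::finite set). (if i = k then a else 0) * (f k :: real)) = a * f i"
proof -
  have "(\<Sum>k\<in>(UNIV::'p set). (if i = k then a else 0) * f k) = (\<Sum>k\<in>(UNIV::'p set). if i = k then a * f k else 0)"
    by (intro sum.cong) auto
  also have "\<dots> = a * f i" by (simp add: sum.delta)
  finally show ?thesis .
qed

lemma diag_mult: "diag d ** diag e = diag (\<lambda>i. d i * e i)"
  unfolding diag_def matrix_matrix_mult_def vec_eq_iff
  by (auto simp: sum_delta_mult)

lemma mat1_diag: "mat 1 = diag (\<lambda>_. 1)"
  by (simp add: diag_def mat_def)

lemma diag_mulv: "diag d *v v = (\<chi> i. d i * v$i)"
  unfolding diag_def matrix_vector_mult_def vec_eq_iff by (auto simp: sum_delta_mult)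

lemma diag_scale: "c *\<^sub>R diag d = diag (\<lambda>i. c * d i)"
  by (simp add: diag_def vec_eq_iff)

lemma det_diag: "det (diag d) = (\<Prod>i\<in>UNIV. d i)"
  by (subst det_diagonal) (auto simp: diag_def)

lemma matrix_inv_unique':
  fixes A B :: "real^'n::finite^'n"
  assumes "A ** B = mat 1" "B ** A = mat 1"
  shows "matrix_inv A = B"
proof -
  have ex: "\<exists>A'. A ** A' = mat 1 \<and> A' ** A = mat 1" using assms by blast
  define A' where "A' = matrix_inv A"
  have "A ** A' = mat 1 \<and> A' ** A = mat 1"
    unfolding A'_def matrix_inv_def by (rule someI_ex[OF ex])
  then have "A' = A' ** (A ** B)" using assms by (simp add: matrix_mul_rid)
  also have "\<dots> = (A' ** A) ** B" by (simp add: matrix_mul_assoc)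
  also have "\<dots> = B" using \<open>A ** A' = mat 1 \<and> A' ** A = mat 1\<close> by (simp add: matrix_mul_lid)
  finally show ?thesis by (simp add: A'_def)
qed

lemma matrix_inv_diag:
  assumes "\<And>i. d i \<noteq> 0"
  shows "matrix_inv (diag d) = diag (\<lambda>i. 1 / d i)"
  using assms by (intro matrix_inv_unique') (simp_all add: diag_mult mat1_diag)

definition Ncnt :: "(nat \<Rightarrow> (real^'p::finite) \<times> real) \<Rightarrow> nat \<Rightarrow> 'p \<Rightarrow> real" where
  "Ncnt h m i = (\<Sum>j<m. (fst (h j) $ i)\<^sup>2)"

definition Scnt :: "(nat \<Rightarrow> (real^'p::finite) \<times> real) \<Rightarrow> nat \<Rightarrow> 'p \<Rightarrow> real" where
  "Scnt h m i = (\<Sum>j<m. fst (h j) $ i * snd (h j))"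

definition basisd :: "(nat \<Rightarrow> (real^'p::finite) \<times> real) \<Rightarrow> nat \<Rightarrow> bool" where
  "basisd h m \<longleftrightarrow> (\<forall>j < m. fst (h j) \<in> range (\<lambda>i. axis i 1))"

lemma basis_prod: "x \<in> range (\<lambda>i. axis i (1::real)) \<Longrightarrow> x $ a * x $ b = (if a = b then (x $ a)\<^sup>2 else 0)"
  by (auto simp: axis_def power2_eq_square)

lemma gram_diag:
  assumes "basisd h m"
  shows "gram h m = diag (Ncnt h m)"
proof -
  have "gram h m $ a $ b = diag (Ncnt h m) $ a $ b" for a b
  proof -
    have "gram h m $ a $ b = (\<Sum>j<m. fst (h j) $ a * fst (h j) $ b)"
      unfolding gram_def by (simp add: sum_component)
    also have "\<dots> = (\<Sum>j<m. if a = b then (fst (h j) $ a)\<^sup>2 else 0)"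
      using assms unfolding basisd_def by (intro sum.cong refl basis_prod) auto
    finally show ?thesis by (simp add: diag_def Ncnt_def)
  qed
  then show ?thesis by (simp add: vec_eq_iff)
qed

lemma xty_eq: "xty h m = (\<chi> i. Scnt h m i)"
  by (simp add: xty_def Scnt_def vec_eq_iff sum_component mult.commute)

lemma ols_eq:
  assumes "basisd h m" "\<And>i. Ncnt h m i > 0"
  shows "ols h m = (\<chi> i. Scnt h m i / Ncnt h m i)"
proof -
  have "\<And>i. Ncnt h m i \<noteq> 0" using assms(2) by (metis less_irrefl)
  then show ?thesis unfolding ols_def gram_diag[OF assms(1)]
    by (simp add: matrix_inv_diag diag_mulv xty_eq vec_eq_iff)
qed


lemma nd_expand:
  assumes "N > 0" "sd > 0"
  shows "normal_density c (sd / sqrt N) x = 1 / sqrt (2 * pi * (sd / sqrt N)\<^sup>2) * exp (- (N * (x - c)\<^sup>2) / (2 * sd\<^sup>2))"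
  using assms unfolding normal_density_def by (simp add: power_divide field_simps)

lemma phi_expand:
  fixes c :: "real^'p::finite"
  assumes N: "\<And>i. N i > 0" and sd: "sd > 0"
  shows "phi c (\<lambda>i. sd / sqrt (N i)) b = (\<Prod>i\<in>UNIV. 1 / sqrt (2 * pi * (sd / sqrt (N i))\<^sup>2)) * exp (- (\<Sum>i\<in>UNIV. N i * (b$i - c$i)\<^sup>2) / (2 * sd\<^sup>2))"
proof -
  have "phi c (\<lambda>i. sd / sqrt (N i)) b = (\<Prod>i\<in>UNIV. 1 / sqrt (2 * pi * (sd / sqrt (N i))\<^sup>2) * exp (- (N i * (b$i - c$i)\<^sup>2) / (2 * sd\<^sup>2)))"
    unfolding phi_def using N sd by (intro prod.cong refl nd_expand)
  also have "\<dots> = (\<Prod>i\<in>UNIV. 1 / sqrt (2 * pi * (sd / sqrt (N i))\<^sup>2)) * (\<Prod>i\<in>UNIV. exp (- (N i * (b$i - c$i)\<^sup>2) / (2 * sd\<^sup>2)))"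
    by (rule prod.distrib)
  also have "(\<Prod>i\<in>UNIV. exp (- (N i * (b$i - c$i)\<^sup>2) / (2 * sd\<^sup>2))) = exp (- (\<Sum>i\<in>UNIV. N i * (b$i - c$i)\<^sup>2) / (2 * sd\<^sup>2))"
    by (simp add: exp_sum[symmetric] sum_divide_distrib[symmetric] sum_negf)
  finally show ?thesis .
qed

lemma sq_basis:
  assumes "x \<in> range (\<lambda>i. axis i (1::real))"
  shows "(y - x \<bullet> b)\<^sup>2 = y\<^sup>2 - 2 * (\<Sum>i\<in>UNIV. b$i * (x$i * y)) + (\<Sum>i\<in>UNIV. (x$i)\<^sup>2 * (b$i)\<^sup>2)"
proof -
  obtain k where k: "x = axis k 1" using assms by auto
  have "x \<bullet> b = b$k" unfolding k by (simp add: inner_axis')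
  moreover have "(\<Sum>i\<in>UNIV. b$i * (x$i * y)) = (\<Sum>i\<in>UNIV. if i = k then b$i * y else 0)"
    unfolding k by (intro sum.cong) (auto simp: axis_def)
  moreover have "(\<Sum>i\<in>UNIV. (x$i)\<^sup>2 * (b$i)\<^sup>2) = (\<Sum>i\<in>UNIV. if i = k then (b$i)\<^sup>2 else 0)"
    unfolding k by (intro sum.cong) (auto simp: axis_def)
  ultimately show ?thesis by (simp add: power2_eq_square algebra_simps)
qed

lemma rss_decomp:
  assumes bd: "basisd h m"
  shows "(\<Sum>j<m. (snd (h j) - fst (h j) \<bullet> b)\<^sup>2) = (\<Sum>j<m. (snd (h j))\<^sup>2) - 2 * (\<Sum>i\<in>UNIV. b$i * Scnt h m i) + (\<Sum>i\<in>UNIV. Ncnt h m i * (b$i)\<^sup>2)"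
proof -
  have "(\<Sum>j<m. (snd (h j) - fst (h j) \<bullet> b)\<^sup>2) = (\<Sum>j<m. (snd (h j))\<^sup>2 - 2 * (\<Sum>i\<in>UNIV. b$i * (fst (h j)$i * snd (h j))) + (\<Sum>i\<in>UNIV. (fst (h j)$i)\<^sup>2 * (b$i)\<^sup>2))"
    using bd unfolding basisd_def by (intro sum.cong refl sq_basis) auto
  also have "\<dots> = (\<Sum>j<m. (snd (h j))\<^sup>2) - 2 * (\<Sum>j<m. \<Sum>i\<in>UNIV. b$i * (fst (h j)$i * snd (h j))) + (\<Sum>j<m. \<Sum>i\<in>UNIV. (fst (h j)$i)\<^sup>2 * (b$i)\<^sup>2)"
    by (simp add: sum.distrib sum_subtractf sum_distrib_left)
  also have "(\<Sum>j<m. \<Sum>i\<in>UNIV. b$i * (fst (h j)$i * snd (h j))) = (\<Sum>i\<in>UNIV. b$i * Scnt h m i)"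
    by (subst sum.swap) (simp add: Scnt_def sum_distrib_left)
  also have "(\<Sum>j<m. \<Sum>i\<in>UNIV. (fst (h j)$i)\<^sup>2 * (b$i)\<^sup>2) = (\<Sum>i\<in>UNIV. Ncnt h m i * (b$i)\<^sup>2)"
    by (subst sum.swap) (simp add: Ncnt_def sum_distrib_right)
  finally show ?thesis .
qed

lemma lik_phi:
  fixes h :: "nat \<Rightarrow> (real^'p::finite) \<times> real"
  assumes bd: "basisd h m" and N: "\<And>i. Ncnt h m i > 0" and sd: "sd > 0"
  shows "\<exists>K>0. \<forall>b. lik sd h m b = K * phi (\<chi> i. Scnt h m i / Ncnt h m i) (\<lambda>i. sd / sqrt (Ncnt h m i)) b"
proof -
  define c :: "real^'p" where "c = (\<chi> i. Scnt h m i / Ncnt h m i)"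
  define P where "P = (\<Prod>i\<in>(UNIV::'p set). 1 / sqrt (2 * pi * (sd / sqrt (Ncnt h m i))\<^sup>2))"
  define R where "R = (\<Sum>j<m. (snd (h j))\<^sup>2) - (\<Sum>i\<in>(UNIV::'p set). (Scnt h m i)\<^sup>2 / Ncnt h m i)"
  have P: "P > 0" unfolding P_def using N sd by (intro prod_pos) (auto intro!: mult_pos_pos, metis N less_irrefl)
  have key: "(\<Sum>j<m. (snd (h j) - fst (h j) \<bullet> b)\<^sup>2) = R + (\<Sum>i\<in>UNIV. Ncnt h m i * (b$i - c$i)\<^sup>2)" for b
  proof -
    have "(\<Sum>i\<in>UNIV. Ncnt h m i * (b$i - c$i)\<^sup>2) = (\<Sum>i\<in>UNIV. Ncnt h m i * (b$i)\<^sup>2 - 2 * (b$i * Scnt h m i) + (Scnt h m i)\<^sup>2 / Ncnt h m i)"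
    proof (intro sum.cong refl)
      fix i
      have "Ncnt h m i \<noteq> 0" using N[of i] by simp
      then show "Ncnt h m i * (b$i - c$i)\<^sup>2 = Ncnt h m i * (b$i)\<^sup>2 - 2 * (b$i * Scnt h m i) + (Scnt h m i)\<^sup>2 / Ncnt h m i"
        by (simp add: c_def power2_eq_square field_simps)
    qed
    then show ?thesis unfolding rss_decomp[OF bd] R_def
      by (simp add: sum.distrib sum_subtractf sum_distrib_left)
  qed
  have "lik sd h m b = (exp (- R / (2 * sd\<^sup>2)) / P) * phi c (\<lambda>i. sd / sqrt (Ncnt h m i)) b" for b
  proof -
    have "lik sd h m b = exp (\<Sum>j<m. - (snd (h j) - fst (h j) \<bullet> b)\<^sup>2 / (2 * sd\<^sup>2))"
      unfolding lik_def by (simp add: exp_sum)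
    also have "(\<Sum>j<m. - (snd (h j) - fst (h j) \<bullet> b)\<^sup>2 / (2 * sd\<^sup>2)) = - (R + (\<Sum>i\<in>UNIV. Ncnt h m i * (b$i - c$i)\<^sup>2)) / (2 * sd\<^sup>2)"
      using sd by (simp add: sum_divide_distrib[symmetric] sum_negf key) (simp add: field_simps)
    also have "exp \<dots> = exp (- R / (2 * sd\<^sup>2)) * exp (- (\<Sum>i\<in>UNIV. Ncnt h m i * (b$i - c$i)\<^sup>2) / (2 * sd\<^sup>2))"
      by (subst exp_add[symmetric], rule arg_cong[where f=exp]) (simp add: add_divide_distrib diff_divide_distrib)
    also have "\<dots> = (exp (- R / (2 * sd\<^sup>2)) / P) * phi c (\<lambda>i. sd / sqrt (Ncnt h m i)) b"
      using P unfolding phi_expand[OF N sd] P_def[symmetric] by simp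
    finally show ?thesis .
  qed
  then show ?thesis using P unfolding c_def by (intro exI[of _ "exp (- R / (2 * sd\<^sup>2)) / P"]) auto
qed


lemma inv_sqrt_powr: "x > 0 \<Longrightarrow> 1 / sqrt x = x powr (-1/2)"
  by (simp add: powr_minus_divide powr_half_sqrt[symmetric])

lemma mvn_eq:
  fixes h :: "nat \<Rightarrow> (real^'p::finite) \<times> real"
  assumes bd: "basisd h m" and N: "\<And>i. Ncnt h m i > 0" and sd: "sd > 0"
  shows "mvn (ols h m) (sd\<^sup>2 *\<^sub>R matrix_inv (gram h m))
       = density lborel (\<lambda>b. ennreal (phi (\<chi> i. Scnt h m i / Ncnt h m i) (\<lambda>i. sd / sqrt (Ncnt h m i)) b))"
proof -
  define c :: "real^'p" where "c = (\<chi> i. Scnt h m i / Ncnt h m i)"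
  define Nn where "Nn = Ncnt h m"
  have Nn: "\<And>i. Nn i > 0" using N by (simp add: Nn_def)
  have Nz: "\<And>i. Nn i \<noteq> 0" using Nn by (metis less_irrefl)
  have cov: "sd\<^sup>2 *\<^sub>R matrix_inv (gram h m) = diag (\<lambda>i. sd\<^sup>2 * (1 / Nn i))"
    unfolding gram_diag[OF bd] Nn_def[symmetric] using Nz by (simp add: matrix_inv_diag diag_scale)
  have icov: "matrix_inv (diag (\<lambda>i. sd\<^sup>2 * (1 / Nn i))) = diag (\<lambda>i. 1 / (sd\<^sup>2 * (1 / Nn i)))"
    using Nz sd by (intro matrix_inv_diag) auto
  have ols: "ols h m = c" unfolding c_def by (rule ols_eq[OF bd N])
  have "(2 * pi) powr (- real CARD('p) / 2) * det (diag (\<lambda>i. sd\<^sup>2 * (1 / Nn i))) powr (- 1 / 2)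
      * exp (- (1 / 2) * ((b - c) \<bullet> (diag (\<lambda>i. 1 / (sd\<^sup>2 * (1 / Nn i))) *v (b - c))))
      = phi c (\<lambda>i. sd / sqrt (Nn i)) b" for b
  proof -
    have c1: "(2 * pi) powr (- real CARD('p) / 2) = (\<Prod>i\<in>(UNIV::'p set). (2 * pi) powr (-1/2))"
      by (simp add: powr_power)
    have c2: "det (diag (\<lambda>i. sd\<^sup>2 * (1 / Nn i))) powr (- 1 / 2) = (\<Prod>i\<in>UNIV. (sd\<^sup>2 * (1 / Nn i)) powr (-1/2))"
      by (simp add: det_diag prod_powr_distrib)
    have c3: "(\<Prod>i\<in>(UNIV::'p set). (2 * pi) powr (-1/2)) * (\<Prod>i\<in>UNIV. (sd\<^sup>2 * (1 / Nn i)) powr (-1/2))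
        = (\<Prod>i\<in>UNIV. 1 / sqrt (2 * pi * (sd / sqrt (Nn i))\<^sup>2))"
    proof -
      have "(\<Prod>i\<in>(UNIV::'p set). (2 * pi) powr (-1/2)) * (\<Prod>i\<in>UNIV. (sd\<^sup>2 * (1 / Nn i)) powr (-1/2))
         = (\<Prod>i\<in>UNIV. (2 * pi) powr (-1/2) * (sd\<^sup>2 * (1 / Nn i)) powr (-1/2))"
        by (simp add: prod.distrib)
      also have "\<dots> = (\<Prod>i\<in>UNIV. 1 / sqrt (2 * pi * (sd / sqrt (Nn i))\<^sup>2))"
      proof (intro prod.cong refl)
        fix i
        have "(sd / sqrt (Nn i))\<^sup>2 = sd\<^sup>2 * (1 / Nn i)" using Nn[of i] by (simp add: power_divide)
        moreover have "2 * pi * (sd\<^sup>2 * (1 / Nn i)) > 0" using Nn[of i] sd by simp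
        ultimately show "(2 * pi) powr (-1/2) * (sd\<^sup>2 * (1 / Nn i)) powr (-1/2) = 1 / sqrt (2 * pi * (sd / sqrt (Nn i))\<^sup>2)"
          by (simp only: inv_sqrt_powr powr_mult)
      qed
      finally show ?thesis .
    qed
    have c4: "(b - c) \<bullet> (diag (\<lambda>i. 1 / (sd\<^sup>2 * (1 / Nn i))) *v (b - c)) = (\<Sum>i\<in>UNIV. Nn i * (b$i - c$i)\<^sup>2) / sd\<^sup>2"
      unfolding diag_mulv inner_vec_def using sd
      by (simp add: sum_divide_distrib power2_eq_square field_simps)
    have c5: "- (1 / 2) * ((\<Sum>i\<in>UNIV. Nn i * (b$i - c$i)\<^sup>2) / sd\<^sup>2) = - (\<Sum>i\<in>UNIV. Nn i * (b$i - c$i)\<^sup>2) / (2 * sd\<^sup>2)"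
      by simp
    show ?thesis
      unfolding phi_expand[OF Nn sd] c1 c2 c4 c5 c3[symmetric] by simp
  qed
  then show ?thesis unfolding mvn_def cov icov ols Nn_def[symmetric] by (simp add: c_def Nn_def)
qed

lemma eigen_diag:
  fixes d :: "'p::finite \<Rightarrow> real"
  shows "d i \<in> eigenvalues (diag d)" and "eigenvalues (diag d) \<subseteq> range d"
proof -
  show "d i \<in> eigenvalues (diag d)"
    unfolding eigenvalues_def
    by (intro CollectI exI[of _ "axis i 1"]) (auto simp: diag_mulv vec_eq_iff axis_def axis_eq_0_iff)
  show "eigenvalues (diag d) \<subseteq> range d"
  proof
    fix c assume "c \<in> eigenvalues (diag d)"
    then obtain v where v: "v \<noteq> 0" "diag d *v v = c *\<^sub>R v" unfolding eigenvalues_def by auto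
    then obtain k where k: "v $ k \<noteq> 0" by (metis vec_eq_iff zero_index)
    have "d k * v $ k = c * v $ k" using v(2) by (simp add: diag_mulv vec_eq_iff)
    then have "c = d k" using k by simp
    then show "c \<in> range d" by simp
  qed
qed

lemma lambda_min_le:
  fixes d :: "'p::finite \<Rightarrow> real"
  shows "lambda_min (diag d) \<le> d i"
proof -
  have fin: "finite (eigenvalues (diag d))" using eigen_diag(2)[of d] by (rule finite_subset) simp
  show ?thesis unfolding lambda_min_def using eigen_diag(1)[of d i] fin by (rule Min_le[rotated])
qed


lemma comp_meas:
  fixes g :: "real^'p::finite \<Rightarrow> real \<Rightarrow> real"
  assumes gm: "(\<lambda>z. g (fst z) (snd z)) \<in> borel_measurable (borel \<Otimes>\<^sub>M borel)"
  shows "(\<lambda>h::nat \<Rightarrow> (real^'p) \<times> real. \<Sum>j<k. g (fst (h j)) (snd (h j))) \<in> borel_measurable (hist_space k)"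
proof -
  have "(\<lambda>h::nat \<Rightarrow> (real^'p) \<times> real. g (fst (h j)) (snd (h j))) \<in> borel_measurable (hist_space k)" if "j < k" for j
  proof -
    have "(\<lambda>h::nat \<Rightarrow> (real^'p) \<times> real. h j) \<in> hist_space k \<rightarrow>\<^sub>M (borel :: ((real^'p) \<times> real) measure)"
      unfolding hist_space_def using that by (intro measurable_component_singleton) auto
    then have "(\<lambda>h::nat \<Rightarrow> (real^'p) \<times> real. h j) \<in> hist_space k \<rightarrow>\<^sub>M (borel::(real^'p) measure) \<Otimes>\<^sub>M (borel::real measure)"
      by (simp add: borel_prod)
    from measurable_compose[OF this gm] show ?thesis by simp
  qed
  then show ?thesis by measurable
qed

definition gdev :: "real \<Rightarrow> real \<Rightarrow> real^'p::finite \<Rightarrow> real \<Rightarrow> 'p \<Rightarrow> real^'p \<Rightarrow> real \<Rightarrow> real" where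
  "gdev sd \<epsilon> beta0 sg i x y = (\<epsilon>/sd\<^sup>2) * sg * x$i * (y - x \<bullet> beta0) - (\<epsilon>/sd\<^sup>2)\<^sup>2 * sd\<^sup>2 * (x$i)\<^sup>2 / 2"

lemma gdev_meas: "(\<lambda>z. gdev sd \<epsilon> beta0 sg i (fst z) (snd z)) \<in> borel_measurable (borel \<Otimes>\<^sub>M borel)"
  unfolding borel_prod gdev_def
  by (intro borel_measurable_continuous_onI continuous_intros) auto

lemma gdev_mgf:
  assumes sd: "sd > 0" and sg: "sg\<^sup>2 = 1"
  shows "(\<integral>\<^sup>+ y. ennreal (exp (gdev sd \<epsilon> beta0 sg i x y)) \<partial>density lborel (\<lambda>y. ennreal (normal_density (x \<bullet> beta0) sd y))) \<le> 1"
proof -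
  have "gdev sd \<epsilon> beta0 sg i x y = ((\<epsilon>/sd\<^sup>2) * sg * x$i) * (y - x \<bullet> beta0) - ((\<epsilon>/sd\<^sup>2) * sg * x$i)\<^sup>2 * sd\<^sup>2 / 2" for y
    unfolding gdev_def using sg by (simp add: power_mult_distrib power_divide)
  then show ?thesis using normal_mgf[OF sd, where a="(\<epsilon>/sd\<^sup>2) * sg * x$i" and mu="x \<bullet> beta0"] by simp
qed

lemma dev_event:
  fixes Lam :: "nat \<Rightarrow> (nat \<Rightarrow> (real^'p::finite) \<times> real) \<Rightarrow> (real^'p) measure"
  fixes beta0 :: "real^'p" and k :: nat and t \<epsilon> :: real and i :: 'p
  assumes L: "\<And>j. Lam j \<in> hist_space j \<rightarrow>\<^sub>M prob_algebra borel" and sd: "sd > 0" and sg: "sg\<^sup>2 = 1"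
  defines "E \<equiv> {h \<in> space (traj Lam beta0 sd k). exp t \<le> exp (\<Sum>j<k. gdev sd \<epsilon> beta0 sg i (fst (h j)) (snd (h j)))}"
  shows "E \<in> sets (traj Lam beta0 sd k)" and "measure (traj Lam beta0 sd k) E \<le> exp (- t)"
proof -
  let ?P = "traj Lam beta0 sd k"
  interpret P: prob_space ?P by (rule traj_prob[OF L sd])
  let ?u = "\<lambda>h. \<Sum>j<k. gdev sd \<epsilon> beta0 sg i (fst (h j)) (snd (h j))"
  have um: "?u \<in> borel_measurable ?P"
    by (subst measurable_cong_sets[OF traj_sets[OF L sd] refl]) (rule comp_meas[OF gdev_meas])
  show Es: "E \<in> sets ?P" unfolding E_def using um by measurable
  have int: "(\<integral>\<^sup>+ h. ennreal (exp (?u h)) \<partial>?P) \<le> 1"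
    by (rule exp_mart[OF L sd gdev_meas gdev_mgf[OF sd sg]])
  have "(\<integral>\<^sup>+ h. ennreal (exp t) * indicator E h \<partial>?P) \<le> (\<integral>\<^sup>+ h. ennreal (exp (?u h)) \<partial>?P)"
    by (intro nn_integral_mono) (auto simp: E_def split: split_indicator)
  also have "\<dots> \<le> 1" by (rule int)
  finally have "ennreal (exp t) * emeasure ?P E \<le> 1"
    using Es by (simp add: nn_integral_cmult_indicator)
  then have "ennreal (exp t) * ennreal (measure ?P E) \<le> 1"
    by (simp add: P.emeasure_eq_measure)
  then have "exp t * measure ?P E \<le> 1"
    by (simp add: ennreal_mult[symmetric])
  then show "measure ?P E \<le> exp (- t)"
    by (simp add: exp_minus field_simps)
qed


lemma det_tv:
  fixes prior :: "real^'p::finite \<Rightarrow> real" and beta0 :: "real^'p" and h :: "nat \<Rightarrow> (real^'p) \<times> real"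
  assumes pn: "\<And>b. prior b \<ge> 0" and pc: "continuous_on UNIV prior"
    and pbd: "\<exists>B. \<forall>b. prior b \<le> B" and sd: "sd > 0"
    and bd: "basisd h m" and N: "\<And>i. Ncnt h m i > 0" and d: "\<delta> > 0" and Nd: "\<And>i. Ncnt h m i \<ge> (sd/\<delta>)\<^sup>2"
    and an: "\<forall>c s. (\<forall>i. 0 < s i \<and> s i \<le> \<delta>) \<longrightarrow> (\<forall>i. \<bar>c$i - beta0$i\<bar> \<le> \<epsilon>) \<longrightarrow>
     (\<integral>b. prior b * phi c s b \<partial>lborel) > 0 \<and>
     (\<integral>b. \<bar>prior b * phi c s b / (\<integral>b. prior b * phi c s b \<partial>lborel) - phi c s b\<bar> \<partial>lborel) \<le> e"
    and close: "\<And>i. \<bar>Scnt h m i / Ncnt h m i - beta0$i\<bar> \<le> \<epsilon>"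
  shows "\<bar>tv_dist (posterior prior sd h m) (mvn (ols h m) (sd\<^sup>2 *\<^sub>R matrix_inv (gram h m)))\<bar> \<le> e"
proof -
  define c :: "real^'p" where "c = (\<chi> i. Scnt h m i / Ncnt h m i)"
  define s where "s i = sd / sqrt (Ncnt h m i)" for i
  have s: "0 < s i \<and> s i \<le> \<delta>" for i
  proof
    show "0 < s i" using sd N[of i] by (simp add: s_def)
    have "sd / \<delta> \<le> sqrt (Ncnt h m i)" using Nd[of i] sd d by (metis real_le_rsqrt)
    then show "s i \<le> \<delta>" using sd d N[of i] by (simp add: s_def field_simps)
  qed
  have cc: "\<bar>c$i - beta0$i\<bar> \<le> \<epsilon>" for i using close[of i] by (simp add: c_def)
  define Z where "Z = (\<integral>b. prior b * phi c s b \<partial>lborel)"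
  have Z: "Z > 0" and bound: "(\<integral>b. \<bar>prior b * phi c s b / Z - phi c s b\<bar> \<partial>lborel) \<le> e"
    using an s cc unfolding Z_def by blast+
  obtain K where K: "K > 0" and lik: "\<And>b. lik sd h m b = K * phi c s b"
    using lik_phi[OF bd N sd] unfolding c_def s_def by blast
  have pm: "prior \<in> borel_measurable borel" using pc by (rule borel_measurable_continuous_onI)
  obtain B where B: "\<And>b. prior b \<le> B" using pbd by blast
  have pab: "\<bar>prior b\<bar> \<le> B" for b using pn[of b] B[of b] by simp
  have s0: "\<And>i. 0 < s i" using s by blast
  have fi: "integrable lborel (\<lambda>b. prior b * phi c s b)" by (rule prior_phi_integrable[OF pm pab s0])
  have "(\<integral>c. prior c * lik sd h m c \<partial>lborel) = K * Z"
    unfolding lik Z_def by (simp add: mult.left_commute)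
  then have post: "posterior prior sd h m = density lborel (\<lambda>b. ennreal (prior b * phi c s b / Z))"
    unfolding posterior_def lik using K by (simp add: mult.left_commute)
  have mvn: "mvn (ols h m) (sd\<^sup>2 *\<^sub>R matrix_inv (gram h m)) = density lborel (\<lambda>b. ennreal (phi c s b))"
    unfolding c_def s_def by (rule mvn_eq[OF bd N sd])
  show ?thesis unfolding post mvn
  proof (rule tv_bound_abs)
    show "integrable lborel (\<lambda>b. prior b * phi c s b / Z)" using fi by simp
    show "0 \<le> prior b * phi c s b / Z" for b using pn[of b] phi_nonneg[of c s b] Z by simp
    show "integrable lborel (phi c s)" using phi_integrable[of s c] s0 by blast
    show "0 \<le> phi c s b" for b by (rule phi_nonneg)
    show "(\<integral>b. \<bar>prior b * phi c s b / Z - phi c s b\<bar> \<partial>lborel) \<le> e" by (rule bound)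
  qed
qed


lemma gdev_sum:
  fixes h :: "nat \<Rightarrow> (real^'p::finite) \<times> real"
  assumes bd: "basisd h k" and sd: "sd > 0"
  shows "(\<Sum>j<k. gdev sd \<epsilon> beta0 sg i (fst (h j)) (snd (h j)))
       = (\<epsilon>/sd\<^sup>2) * sg * (Scnt h k i - beta0$i * Ncnt h k i) - \<epsilon>\<^sup>2 / (2 * sd\<^sup>2) * Ncnt h k i"
proof -
  have per: "gdev sd \<epsilon> beta0 sg i x y = (\<epsilon>/sd\<^sup>2) * sg * (x$i * y - beta0$i * (x$i)\<^sup>2) - \<epsilon>\<^sup>2 / (2 * sd\<^sup>2) * (x$i)\<^sup>2"
    if x: "x \<in> range (\<lambda>i. axis i (1::real))" for x y
  proof -
    obtain k where k: "x = axis k 1" using x by auto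
    have i1: "x \<bullet> beta0 = beta0$k" unfolding k by (simp add: inner_axis')
    have i2: "x$i = (if i = k then 1 else 0)" unfolding k by (simp add: axis_def)
    have "x$i * (x \<bullet> beta0) = beta0$i * (x$i)\<^sup>2" unfolding i1 i2 by simp
    moreover have "(\<epsilon>/sd\<^sup>2)\<^sup>2 * sd\<^sup>2 = \<epsilon>\<^sup>2 / sd\<^sup>2" using sd by (simp add: power2_eq_square field_simps)
    ultimately show ?thesis unfolding gdev_def by (simp add: algebra_simps add_divide_distrib[symmetric])
  qed
  have "(\<Sum>j<k. gdev sd \<epsilon> beta0 sg i (fst (h j)) (snd (h j)))
      = (\<Sum>j<k. (\<epsilon>/sd\<^sup>2) * sg * (fst (h j)$i * snd (h j) - beta0$i * (fst (h j)$i)\<^sup>2) - \<epsilon>\<^sup>2 / (2 * sd\<^sup>2) * (fst (h j)$i)\<^sup>2)"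
    using bd unfolding basisd_def by (intro sum.cong refl per) auto
  also have "\<dots> = (\<epsilon>/sd\<^sup>2) * sg * (Scnt h k i - beta0$i * Ncnt h k i) - \<epsilon>\<^sup>2 / (2 * sd\<^sup>2) * Ncnt h k i"
  proof -
    have gen: "(\<Sum>j<k. a * (u j - v j) - b * w j) = a * ((\<Sum>j<k. u j) - (\<Sum>j<k. v j)) - b * (\<Sum>j<k. w j)"
      for a b :: real and u v w :: "nat \<Rightarrow> real"
      by (simp add: sum_subtractf sum_distrib_left right_diff_distrib)
    have "(\<Sum>j<k. beta0$i * (fst (h j)$i)\<^sup>2) = beta0$i * Ncnt h k i"
      by (simp add: Ncnt_def sum_distrib_left)
    then show ?thesis using gen[of "\<epsilon>/sd\<^sup>2 * sg" "\<lambda>j. fst (h j)$i * snd (h j)" "\<lambda>j. beta0$i * (fst (h j)$i)\<^sup>2" "\<epsilon>\<^sup>2 / (2 * sd\<^sup>2)" "\<lambda>j. (fst (h j)$i)\<^sup>2"]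
      by (simp add: Scnt_def Ncnt_def)
  qed
  finally show ?thesis .
qed

lemma dev_member:
  fixes h :: "nat \<Rightarrow> (real^'p::finite) \<times> real"
  assumes bd: "basisd h k" and sd: "sd > 0" and NK: "Ncnt h k i \<ge> K" and K: "K > 0" and eps: "\<epsilon> > 0"
    and far: "\<bar>Scnt h k i / Ncnt h k i - beta0$i\<bar> > \<epsilon>"
  shows "\<exists>sg\<in>{1, -1}. exp (\<epsilon>\<^sup>2 * K / (2 * sd\<^sup>2)) \<le> exp (\<Sum>j<k. gdev sd \<epsilon> beta0 sg i (fst (h j)) (snd (h j)))"
proof -
  define N where "N = Ncnt h k i"
  define S where "S = Scnt h k i"
  have N: "N > 0" using NK K by (simp add: N_def)
  obtain sg where sg: "sg \<in> {1, -1::real}" and dev: "sg * (S - beta0$i * N) > \<epsilon> * N"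
  proof (cases "S / N - beta0$i > \<epsilon>")
    case True
    then have "S - beta0$i * N > \<epsilon> * N" using N by (simp add: field_simps)
    then show ?thesis using that[of 1] by simp
  next
    case False
    then have "beta0$i - S / N > \<epsilon>" using far by (simp add: N_def S_def abs_if split: if_splits)
    then have "beta0$i * N - S > \<epsilon> * N" using N by (simp add: field_simps)
    then show ?thesis using that[of "-1"] by simp
  qed
  have "\<epsilon>\<^sup>2 * K / (2 * sd\<^sup>2) \<le> \<epsilon>\<^sup>2 * N / (2 * sd\<^sup>2)"
    using NK sd by (intro divide_right_mono mult_left_mono) (auto simp: N_def)
  also have "\<dots> = (\<epsilon>/sd\<^sup>2) * (\<epsilon> * N) - \<epsilon>\<^sup>2 / (2 * sd\<^sup>2) * N"
    using sd by (simp add: field_simps power2_eq_square)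
  also have "\<dots> \<le> (\<epsilon>/sd\<^sup>2) * (sg * (S - beta0$i * N)) - \<epsilon>\<^sup>2 / (2 * sd\<^sup>2) * N"
    using dev eps sd by (intro diff_right_mono mult_left_mono) auto
  also have "\<dots> = (\<Sum>j<k. gdev sd \<epsilon> beta0 sg i (fst (h j)) (snd (h j)))"
    unfolding gdev_sum[OF bd sd] by (simp add: N_def S_def)
  finally show ?thesis using sg by auto
qed

lemma outer_nonneg: "outer_prob M S \<ge> 0"
  unfolding outer_prob_def by (rule cInf_greatest) auto

lemma outer_le:
  assumes "A \<in> sets M" "S \<inter> space M \<subseteq> A"
  shows "outer_prob M S \<le> measure M A"
  unfolding outer_prob_def
  by (rule cInf_lower) (use assms in \<open>auto intro!: bdd_belowI[of _ 0]\<close>)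

lemma outer_sub:
  assumes fm: "finite_measure M" and U: "U \<in> sets M" and sub: "S \<inter> space M \<subseteq> T \<union> U"
  shows "outer_prob M S \<le> outer_prob M T + measure M U"
proof -
  interpret finite_measure M by (rule fm)
  have "outer_prob M S - measure M U \<le> outer_prob M T"
    unfolding outer_prob_def[of M T]
  proof (rule cInf_greatest)
    show "{measure M A |A. A \<in> sets M \<and> T \<inter> space M \<subseteq> A} \<noteq> {}" by auto
    fix x assume "x \<in> {measure M A |A. A \<in> sets M \<and> T \<inter> space M \<subseteq> A}"
    then obtain A where A: "A \<in> sets M" "T \<inter> space M \<subseteq> A" and x: "x = measure M A" by auto
    have "S \<inter> space M \<subseteq> A \<union> U" using sub A(2) sets.sets_into_space[OF U] by auto
    then have "outer_prob M S \<le> measure M (A \<union> U)" using A U by (intro outer_le) auto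
    also have "\<dots> \<le> measure M A + measure M U" using A U by (intro measure_subadditive) (auto simp: emeasure_finite)
    finally show "outer_prob M S - measure M U \<le> x" using x by simp
  qed
  then show ?thesis by simp
qed


lemma per_n:
  fixes Lam :: "nat \<Rightarrow> (nat \<Rightarrow> (real^'p::finite) \<times> real) \<Rightarrow> (real^'p) measure"
    and prior :: "real^'p \<Rightarrow> real" and beta0 :: "real^'p" and k :: nat
  assumes L: "\<And>j. Lam j \<in> hist_space j \<rightarrow>\<^sub>M prob_algebra borel" and sd: "sd > 0"
    and bdA: "AE h in traj Lam beta0 sd k. basisd h k"
    and pn: "\<And>b. prior b \<ge> 0" and pc: "continuous_on UNIV prior" and pbd: "\<exists>B. \<forall>b. prior b \<le> B"
    and d: "\<delta> > 0" and eps: "\<epsilon> > 0" and K: "K > 0" and K0: "(sd/\<delta>)\<^sup>2 \<le> K"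
    and an: "\<forall>c s. (\<forall>i. 0 < s i \<and> s i \<le> \<delta>) \<longrightarrow> (\<forall>i. \<bar>c$i - beta0$i\<bar> \<le> \<epsilon>) \<longrightarrow>
     (\<integral>b. prior b * phi c s b \<partial>lborel) > 0 \<and>
     (\<integral>b. \<bar>prior b * phi c s b / (\<integral>b. prior b * phi c s b \<partial>lborel) - phi c s b\<bar> \<partial>lborel) \<le> e"
  shows "outer_prob (traj Lam beta0 sd k)
           {h \<in> space (traj Lam beta0 sd k). e < \<bar>tv_dist (posterior prior sd h k)
                    (mvn (ols h k) (sd\<^sup>2 *\<^sub>R matrix_inv (gram h k)))\<bar>}
         \<le> outer_prob (traj Lam beta0 sd k) {h \<in> space (traj Lam beta0 sd k). lambda_min (gram h k) \<le> K}
           + real CARD('p) * (2 * exp (- (\<epsilon>\<^sup>2 * K / (2 * sd\<^sup>2))))"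
proof -
  let ?P = "traj Lam beta0 sd k"
  interpret P: prob_space ?P by (rule traj_prob[OF L sd])
  obtain Nul where Nul: "{h \<in> space ?P. \<not> basisd h k} \<subseteq> Nul" "emeasure ?P Nul = 0" "Nul \<in> sets ?P"
    using bdA by (auto elim!: AE_E)
  define t where "t = \<epsilon>\<^sup>2 * K / (2 * sd\<^sup>2)"
  define E where "E i sg = {h \<in> space ?P. exp t \<le> exp (\<Sum>j<k. gdev sd \<epsilon> beta0 sg i (fst (h j)) (snd (h j)))}" for i sg
  have Es: "E i sg \<in> sets ?P" if "sg\<^sup>2 = 1" for i sg
    unfolding E_def by (rule dev_event(1)[OF L sd that])
  have Em: "measure ?P (E i sg) \<le> exp (- t)" if "sg\<^sup>2 = 1" for i sg
    unfolding E_def by (rule dev_event(2)[OF L sd that])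
  define F where "F i = E i 1 \<union> E i (-1)" for i
  have Fs: "F i \<in> sets ?P" for i unfolding F_def using Es[of 1 i] Es[of "-1" i] by auto
  have Fm: "measure ?P (F i) \<le> 2 * exp (- t)" for i
  proof -
    have "measure ?P (F i) \<le> measure ?P (E i 1) + measure ?P (E i (-1))"
      unfolding F_def using Es[of 1 i] Es[of "-1" i] by (intro measure_subadditive) (auto simp: P.emeasure_finite)
    then show ?thesis using Em[of 1 i] Em[of "-1" i] by simp
  qed
  define U where "U = Nul \<union> (\<Union>i. F i)"
  have Us: "U \<in> sets ?P" unfolding U_def using Nul(3) Fs by auto
  have Um: "measure ?P U \<le> real CARD('p) * (2 * exp (- t))"
  proof -
    have "measure ?P U \<le> measure ?P Nul + measure ?P (\<Union>i. F i)"
      unfolding U_def using Nul(3) Fs by (intro measure_subadditive) (auto simp: P.emeasure_finite)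
    also have "measure ?P Nul = 0" using Nul(2) by (simp add: P.emeasure_eq_measure)
    also have "measure ?P (\<Union>i. F i) \<le> (\<Sum>i\<in>UNIV. measure ?P (F i))"
      using Fs by (intro P.finite_measure_subadditive_finite) auto
    also have "\<dots> \<le> (\<Sum>i\<in>(UNIV::'p set). 2 * exp (- t))" by (intro sum_mono Fm)
    finally show ?thesis by simp
  qed
  have sub: "{h \<in> space ?P. e < \<bar>tv_dist (posterior prior sd h k) (mvn (ols h k) (sd\<^sup>2 *\<^sub>R matrix_inv (gram h k)))\<bar>} \<inter> space ?P
     \<subseteq> {h \<in> space ?P. lambda_min (gram h k) \<le> K} \<union> U"
  proof (intro subsetI)
    fix h assume hS: "h \<in> {h \<in> space ?P. e < \<bar>tv_dist (posterior prior sd h k) (mvn (ols h k) (sd\<^sup>2 *\<^sub>R matrix_inv (gram h k)))\<bar>} \<inter> space ?P"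
    then have hsp: "h \<in> space ?P" and big: "e < \<bar>tv_dist (posterior prior sd h k) (mvn (ols h k) (sd\<^sup>2 *\<^sub>R matrix_inv (gram h k)))\<bar>" by auto
    show "h \<in> {h \<in> space ?P. lambda_min (gram h k) \<le> K} \<union> U"
    proof (cases "basisd h k")
      case False
      then show ?thesis using Nul(1) hsp unfolding U_def by auto
    next
      case bd: True
      show ?thesis
      proof (cases "lambda_min (gram h k) \<le> K")
        case True then show ?thesis using hsp by auto
      next
        case False
        have NK: "Ncnt h k i > K" for i
          using False lambda_min_le[of "Ncnt h k" i] unfolding gram_diag[OF bd] by linarith
        have N: "Ncnt h k i > 0" for i using NK[of i] K by linarith
        have Nd: "Ncnt h k i \<ge> (sd/\<delta>)\<^sup>2" for i using NK[of i] K0 by linarith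
        show ?thesis
        proof (cases "\<forall>i. \<bar>Scnt h k i / Ncnt h k i - beta0$i\<bar> \<le> \<epsilon>")
          case True
          then have "\<bar>tv_dist (posterior prior sd h k) (mvn (ols h k) (sd\<^sup>2 *\<^sub>R matrix_inv (gram h k)))\<bar> \<le> e"
            using det_tv[OF pn pc pbd sd bd N d Nd an] by blast
          then show ?thesis using big by linarith
        next
          case False
          then obtain i where far: "\<bar>Scnt h k i / Ncnt h k i - beta0$i\<bar> > \<epsilon>" by (auto simp: not_le)
          obtain sg where sg: "sg \<in> {1, -1}" and ex: "exp t \<le> exp (\<Sum>j<k. gdev sd \<epsilon> beta0 sg i (fst (h j)) (snd (h j)))"
            using dev_member[OF bd sd less_imp_le[OF NK[of i]] K eps far] unfolding t_def by blast
          have "h \<in> E i sg" unfolding E_def using hsp ex by auto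
          then have "h \<in> F i" using sg unfolding F_def by auto
          then show ?thesis unfolding U_def by auto
        qed
      qed
    qed
  qed
  have "outer_prob ?P {h \<in> space ?P. e < \<bar>tv_dist (posterior prior sd h k) (mvn (ols h k) (sd\<^sup>2 *\<^sub>R matrix_inv (gram h k)))\<bar>}
      \<le> outer_prob ?P {h \<in> space ?P. lambda_min (gram h k) \<le> K} + measure ?P U"
    by (rule outer_sub[OF P.finite_measure_axioms Us sub])
  also have "\<dots> \<le> outer_prob ?P {h \<in> space ?P. lambda_min (gram h k) \<le> K} + real CARD('p) * (2 * exp (- t))"
    using Um by simp
  finally show ?thesis unfolding t_def .
qed


theorem theorem2:
  fixes Lam :: "nat \<Rightarrow> nat \<Rightarrow> (nat \<Rightarrow> (real^'p::finite) \<times> real) \<Rightarrow> (real^'p) measure"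
    and m :: "nat \<Rightarrow> nat"
    and beta0 :: "real^'p"
    and sd :: real
    and prior :: "real^'p \<Rightarrow> real"
  assumes sigma_pos: "sd > 0"
    and Lam_kernel: "\<And>n j. Lam n j \<in> measurable (hist_space j) (prob_algebra borel)"
    and basis_design: "\<And>n. AE h in traj (Lam n) beta0 sd (m n).
                          \<forall>j < m n. fst (h j) \<in> range (\<lambda>i. axis i 1)"
    and lambda_min_diverges:
          "tends_to_infinity_in_prob (\<lambda>n. traj (Lam n) beta0 sd (m n))
             (\<lambda>n h. lambda_min (gram h (m n)))"
    and prior_nonneg: "\<And>b. prior b \<ge> 0"
    and prior_density: "(\<integral>\<^sup>+ b. ennreal (prior b) \<partial>lborel) = 1"
    and prior_cont: "continuous_on UNIV prior"
    and prior_bounded: "\<exists>B. \<forall>b. prior b \<le> B"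
    and prior_pos: "prior beta0 > 0"
  shows "tends_to_zero_in_prob (\<lambda>n. traj (Lam n) beta0 sd (m n))
           (\<lambda>n h. tv_dist (posterior prior sd h (m n))
                    (mvn (ols h (m n)) (sd\<^sup>2 *\<^sub>R matrix_inv (gram h (m n)))))"
  unfolding tends_to_zero_in_prob_def
proof (intro allI impI)
  fix e :: real assume e: "e > 0"
  obtain \<delta> \<epsilon> where d: "\<delta> > 0" and eps: "\<epsilon> > 0" and an:
    "\<forall>c s. (\<forall>i. 0 < s i \<and> s i \<le> \<delta>) \<longrightarrow> (\<forall>i. \<bar>c$i - beta0$i\<bar> \<le> \<epsilon>) \<longrightarrow>
     (\<integral>b. prior b * phi c s b \<partial>lborel) > 0 \<and>
     (\<integral>b. \<bar>prior b * phi c s b / (\<integral>b. prior b * phi c s b \<partial>lborel) - phi c s b\<bar> \<partial>lborel) \<le> e"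
    using analytic[OF prior_nonneg prior_cont prior_bounded prior_pos e] by blast
  let ?P = "\<lambda>n. traj (Lam n) beta0 sd (m n)"
  let ?S = "\<lambda>n. {h \<in> space (?P n). e < \<bar>tv_dist (posterior prior sd h (m n))
                    (mvn (ols h (m n)) (sd\<^sup>2 *\<^sub>R matrix_inv (gram h (m n))))\<bar>}"
  show "(\<lambda>n. outer_prob (?P n) (?S n)) \<longlonglongrightarrow> 0"
  proof (rule LIMSEQ_I)
    fix \<eta> :: real assume eta: "\<eta> > 0"
    define p where "p = real CARD('p)"
    have p: "p > 0" by (simp add: p_def)
    define K where "K = max ((sd/\<delta>)\<^sup>2) 1 + 8 * p * sd\<^sup>2 / (\<epsilon>\<^sup>2 * \<eta>)"
    have Kpos: "K > 0" and K0: "(sd/\<delta>)\<^sup>2 \<le> K" and Kbig: "K > 8 * p * sd\<^sup>2 / (\<epsilon>\<^sup>2 * \<eta>)"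
      unfolding K_def using p sigma_pos eps eta by (auto intro!: add_pos_nonneg add_increasing2)
    define t where "t = \<epsilon>\<^sup>2 * K / (2 * sd\<^sup>2)"
    have t: "t > 0" using eps Kpos sigma_pos by (simp add: t_def)
    have tail: "p * (2 * exp (- t)) < \<eta> / 2"
    proof -
      have "p * (2 * exp (- t)) \<le> p * (2 * (1 / t))"
        using exp_neg_le_inv[OF t] p by (intro mult_left_mono) auto
      also have "\<dots> = 4 * p * sd\<^sup>2 / (\<epsilon>\<^sup>2 * K)" using sigma_pos eps Kpos by (simp add: t_def field_simps)
      also have "\<dots> < \<eta> / 2"
      proof -
        have "8 * p * sd\<^sup>2 < K * (\<epsilon>\<^sup>2 * \<eta>)" using Kbig eps eta by (simp add: field_simps)
        then show ?thesis using eps Kpos eta by (simp add: field_simps)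
      qed
      finally show ?thesis .
    qed
    have "(\<lambda>n. outer_prob (?P n) {h \<in> space (?P n). lambda_min (gram h (m n)) \<le> K}) \<longlonglongrightarrow> 0"
      using lambda_min_diverges unfolding tends_to_infinity_in_prob_def by blast
    then obtain no where no: "\<And>n. n \<ge> no \<Longrightarrow> norm (outer_prob (?P n) {h \<in> space (?P n). lambda_min (gram h (m n)) \<le> K} - 0) < \<eta> / 2"
      using LIMSEQ_D[of _ 0 "\<eta>/2"] eta by (meson half_gt_zero)
    show "\<exists>no. \<forall>n\<ge>no. norm (outer_prob (?P n) (?S n) - 0) < \<eta>"
    proof (intro exI[of _ no] allI impI)
      fix n assume n: "n \<ge> no"
      have bdA: "AE h in ?P n. basisd h (m n)"
        using basis_design[of n] unfolding basisd_def .
      have "outer_prob (?P n) (?S n) \<le> outer_prob (?P n) {h \<in> space (?P n). lambda_min (gram h (m n)) \<le> K}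
           + real CARD('p) * (2 * exp (- (\<epsilon>\<^sup>2 * K / (2 * sd\<^sup>2))))"
        by (rule per_n[OF Lam_kernel sigma_pos bdA prior_nonneg prior_cont prior_bounded d eps Kpos K0 an])
      also have "\<dots> < \<eta> / 2 + \<eta> / 2"
      proof -
        have a: "outer_prob (?P n) {h \<in> space (?P n). lambda_min (gram h (m n)) \<le> K} < \<eta> / 2"
          using no[OF n] by simp
        have b: "real CARD('p) * (2 * exp (- (\<epsilon>\<^sup>2 * K / (2 * sd\<^sup>2)))) < \<eta> / 2"
          using tail unfolding p_def t_def .
        from a b show ?thesis by linarith
      qed
      finally have "outer_prob (?P n) (?S n) < \<eta>" by simp
      then show "norm (outer_prob (?P n) (?S n) - 0) < \<eta>" using outer_nonneg[of "?P n" "?S n"] by simp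
    qed
  qed
qed


end
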